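(* For integers $M\ge L>N\ge1$ and $K=M-L+N+1$, the number $Z_{L,M,N}$ of configurations of the four-vertex model on the $L\times M$ grid with scalar-product boundary conditions equals the number of $N$-tuples of pairwise vertex-disjoint up/right lattice paths on the grid $\{1,\dots,L\}\times\{1,\dots,K\}$ in which the $j$th path goes from $(j,1)$ to $(L-N+j,K)$, $j=1,\dots,N$; consequently $$Z_{L,M,N}=\det_{1\le i,j\le N}\left[\binom{M+i-j}{L-N+i-j}\right].$$
   Context: Four-vertex model: on the grid of vertices $(n,m)$, $1\le n\le L$, $1\le m\le M$, every edge (including boundary edges sticking out of the rectangle) is thick or thin, such that at every vertex the four incident edges form one of four allowed local configurations: type $a$: all thin; type $b$: both vertical edges thick, both horizontal thin; type $c$ (two kinds): south and east thick, west and north thin; or west and north thick, south and east thin. Scalar-product boundary conditions: the south boundary vertical edges in columns $1,\dots,N$ and the north boundary vertical edges in columns $L-N+1,\dots,L$ are thick; all other boundary edges are thin. An up/right lattice path uses unit steps $(1,0)$ and $(0,1)$. *)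

theory Defs
  imports Main "Jordan_Normal_Form.Determinant"
begin

(* Edges of the L x M grid, vertices (n,m), 1<=n<=L, 1<=m<=M.
   Vertical edge (n,m), 1<=n<=L, 0<=m<=M: joins (n,m) and (n,m+1)
     (m = 0: south boundary edge of column n; m = M: north boundary edge).
   Horizontal edge (n,m), 0<=n<=L, 1<=m<=M: joins (n,m) and (n+1,m)
     (n = 0: west boundary edge of row m; n = L: east boundary edge).
   A configuration is given by the sets V, H of thick vertical / horizontal edges. *)

definition vert_edges :: "nat \<Rightarrow> nat \<Rightarrow> (nat \<times> nat) set" where
  "vert_edges L M = {1..L} \<times> {0..M}"

definition horiz_edges :: "nat \<Rightarrow> nat \<Rightarrow> (nat \<times> nat) set" where
  "horiz_edges L M = {0..L} \<times> {1..M}"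

(* allowed local configuration at vertex (n,m), given thickness of S, N, W, E edges *)
definition allowed_vertex :: "bool \<Rightarrow> bool \<Rightarrow> bool \<Rightarrow> bool \<Rightarrow> bool" where
  "allowed_vertex s nn w e \<longleftrightarrow>
     (\<not> s \<and> \<not> nn \<and> \<not> w \<and> \<not> e) \<or>        \<comment> \<open>type a\<close>
     (s \<and> nn \<and> \<not> w \<and> \<not> e) \<or>            \<comment> \<open>type b\<close>
     (s \<and> e \<and> \<not> w \<and> \<not> nn) \<or>            \<comment> \<open>type c, first kind\<close>
     (w \<and> nn \<and> \<not> s \<and> \<not> e)"

definition four_vertex_config ::
  "nat \<Rightarrow> nat \<Rightarrow> nat \<Rightarrow> (nat \<times> nat) set \<Rightarrow> (nat \<times> nat) set \<Rightarrow> bool" where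
  "four_vertex_config L M N V H \<longleftrightarrow>
     V \<subseteq> vert_edges L M \<and> H \<subseteq> horiz_edges L M \<and>
     (\<forall>n\<in>{1..L}. \<forall>m\<in>{1..M}.
        allowed_vertex ((n, m - 1) \<in> V) ((n, m) \<in> V) ((n - 1, m) \<in> H) ((n, m) \<in> H)) \<and>
     \<comment> \<open>scalar-product boundary conditions\<close>
     (\<forall>n\<in>{1..L}. (n, 0) \<in> V \<longleftrightarrow> n \<le> N) \<and>
     (\<forall>n\<in>{1..L}. (n, M) \<in> V \<longleftrightarrow> L - N + 1 \<le> n) \<and>
     (\<forall>m\<in>{1..M}. (0, m) \<notin> H \<and> (L, m) \<notin> H)"

definition Z :: "nat \<Rightarrow> nat \<Rightarrow> nat \<Rightarrow> nat" where
  "Z L M N = card {(V, H). four_vertex_config L M N V H}"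

definition up_right_path :: "(nat \<times> nat) list \<Rightarrow> bool" where
  "up_right_path p \<longleftrightarrow> p \<noteq> [] \<and>
     (\<forall>i. Suc i < length p \<longrightarrow>
        p ! Suc i = (fst (p ! i) + 1, snd (p ! i)) \<or> p ! Suc i = (fst (p ! i), snd (p ! i) + 1))"

(* N-tuples (indexed by 1..N, value [] elsewhere) of pairwise vertex-disjoint
   up/right paths in {1..L} x {1..K}, path j from (j,1) to (L-N+j,K) *)
definition path_tuples :: "nat \<Rightarrow> nat \<Rightarrow> nat \<Rightarrow> (nat \<Rightarrow> (nat \<times> nat) list) set" where
  "path_tuples L K N = {P.
     (\<forall>j\<in>{1..N}. up_right_path (P j) \<and> set (P j) \<subseteq> {1..L} \<times> {1..K} \<and>
                  hd (P j) = (j, 1) \<and> last (P j) = (L - N + j, K)) \<and>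
     (\<forall>j. j \<notin> {1..N} \<longrightarrow> P j = []) \<and>
     (\<forall>i\<in>{1..N}. \<forall>j\<in>{1..N}. i \<noteq> j \<longrightarrow> set (P i) \<inter> set (P j) = {})}"

(* binomial coefficient with integer arguments, zero for negative lower index
   (upper index is nonnegative wherever it is used) *)
definition ibinom :: "int \<Rightarrow> int \<Rightarrow> int" where
  "ibinom a b = (if b < 0 \<or> a < 0 then 0 else int (nat a choose nat b))"

end

theory Submission
  imports Defs "HOL-Library.FuncSet"
begin


lemma det_rows_sum:
  fixes f :: "nat \<Rightarrow> 'b \<Rightarrow> nat \<Rightarrow> 'a::comm_ring_1"
  assumes fin: "\<And>i. i < n \<Longrightarrow> finite (S i)"
  shows "(\<Sum>u\<in>PiE {0..<n} S. det (mat n n (\<lambda>(i,j). f i (u i) j)))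
       = det (mat n n (\<lambda>(i,j). \<Sum>x\<in>S i. f i x j))"
proof -
  have "(\<Sum>u\<in>PiE {0..<n} S. det (mat n n (\<lambda>(i,j). f i (u i) j)))
     = (\<Sum>u\<in>PiE {0..<n} S. \<Sum>p\<in>{p. p permutes {0..<n}}. signof p * (\<Prod>i=0..<n. f i (u i) (p i)))"
    by (intro sum.cong refl, subst det_def'[of _ n], auto intro!: sum.cong prod.cong)
  also have "\<dots> = (\<Sum>p\<in>{p. p permutes {0..<n}}. signof p * (\<Sum>u\<in>PiE {0..<n} S. (\<Prod>i=0..<n. f i (u i) (p i))))"
    by (subst sum.swap, simp add: sum_distrib_left)
  also have "\<dots> = (\<Sum>p\<in>{p. p permutes {0..<n}}. signof p * (\<Prod>i=0..<n. \<Sum>x\<in>S i. f i x (p i)))"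
    by (intro sum.cong refl arg_cong[where f="\<lambda>x. _ * x"], subst prod_sum_PiE, auto simp: fin)
  also have "\<dots> = det (mat n n (\<lambda>(i,j). \<Sum>x\<in>S i. f i x j))"
    by (subst det_def'[of _ n], auto intro!: sum.cong prod.cong)
  finally show ?thesis .
qed

lemma det_bidiag:
  fixes R :: "nat \<Rightarrow> nat \<Rightarrow> 'a::comm_ring_1"
  shows "det (mat n n (\<lambda>(i,j). R i j - (if 0 < i \<and> e i then R (i - 1) j else 0)))
       = det (mat n n (\<lambda>(i,j). R i j))"
proof -
  define E :: "'a mat" where "E = mat n n (\<lambda>(i,j). if i = j then 1 else if 0 < i \<and> e i \<and> j = i - 1 then -1 else 0)"
  define RR where "RR = mat n n (\<lambda>(i,j). R i j)"
  have E: "E \<in> carrier_mat n n" and RRc: "RR \<in> carrier_mat n n" unfolding E_def RR_def by auto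
  have dE: "det E = 1"
  proof -
    have "diag_mat E = map (\<lambda>_. 1) [0..<n]" unfolding diag_mat_def using E by (auto simp: E_def)
    thus ?thesis by (subst det_lower_triangular[OF _ E], auto simp: E_def map_replicate_const)
  qed
  have "E * RR = mat n n (\<lambda>(i,j). R i j - (if 0 < i \<and> e i then R (i - 1) j else 0))"
  proof (rule eq_matI)
    fix i j assume ij: "i < dim_row (mat n n (\<lambda>(i,j). R i j - (if 0 < i \<and> e i then R (i - 1) j else 0)))"
      "j < dim_col (mat n n (\<lambda>(i,j). R i j - (if 0 < i \<and> e i then R (i - 1) j else 0)))"
    hence i: "i < n" and j: "j < n" by auto
    have "(E * RR) $$ (i,j) = (\<Sum>k=0..<n. E $$ (i,k) * R k j)"
      using i j E RRc by (simp add: scalar_prod_def RR_def E_def)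
    also have "\<dots> = (\<Sum>k\<in>{0..<n}. (if k = i then R i j else 0) + (if 0 < i \<and> e i \<and> k = i - 1 then - R (i-1) j else 0))"
      using i by (intro sum.cong refl, auto simp: E_def less_imp_diff_less)
    also have "\<dots> = R i j - (if 0 < i \<and> e i then R (i - 1) j else 0)"
      using i by (simp add: sum.distrib, auto)
    finally show "(E * RR) $$ (i,j) = mat n n (\<lambda>(i,j). R i j - (if 0 < i \<and> e i then R (i - 1) j else 0)) $$ (i,j)"
      using i j by simp
  qed (insert E RRc, auto)
  hence "det (mat n n (\<lambda>(i,j). R i j - (if 0 < i \<and> e i then R (i - 1) j else 0))) = det E * det RR"
    using det_mult[OF E RRc] by simp
  thus ?thesis using dE RR_def by simp
qed



definition gb :: "int \<Rightarrow> int \<Rightarrow> rat" where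
  "gb a b = (if b < 0 then 0 else (of_int a gchoose nat b))"

lemma gb_pascal: "gb (a + 1) b = gb a b + gb a (b - 1)"
proof (cases "b < 0")
  case True thus ?thesis by (simp add: gb_def)
next
  case False
  show ?thesis
  proof (cases "b = 0")
    case True thus ?thesis by (simp add: gb_def)
  next
    case False
    define k where "k = nat b - 1"
    have k: "nat b = Suc k" "nat (b - 1) = k" using False \<open>\<not> b < 0\<close> unfolding k_def by auto
    then show ?thesis using \<open>\<not> b < 0\<close> False
      using gbinomial_Suc_Suc[of "of_int a :: rat" k] by (simp add: gb_def add.commute)
  qed
qed

lemma gb_neg[simp]: "b < 0 \<Longrightarrow> gb a b = 0" by (simp add: gb_def)

lemma gb_nonneg: "0 \<le> a \<Longrightarrow> gb a b = of_int (ibinom a b)"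
proof -
  assume a: "0 \<le> a"
  have "(of_int a :: rat) = of_nat (nat a)" using a by simp
  thus ?thesis using a unfolding gb_def ibinom_def
    using binomial_gbinomial[of "nat a" "nat b", where 'a=rat] by simp
qed

lemma gb_zero: "0 \<le> a \<Longrightarrow> a < b \<Longrightarrow> gb a b = 0"
  by (simp add: gb_nonneg ibinom_def binomial_eq_0 nat_less_eq_zless)

lemma gb_diag: "gb 0 0 = 1" by (simp add: gb_def)



definition stepFV :: "nat \<Rightarrow> nat set \<Rightarrow> nat set \<Rightarrow> bool" where
  "stepFV L S T \<longleftrightarrow> S \<subseteq> {1..L} \<and> T \<subseteq> {1..L} \<and>
     (\<forall>x\<in>{1..L}. allowed_vertex (x \<in> S) (x \<in> T) (x - 1 \<in> S - T) (x \<in> S - T)) \<and> L \<notin> S - T"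

definition prv :: "(nat \<Rightarrow> nat) \<Rightarrow> nat \<Rightarrow> nat" where
  "prv y i = (if i = 0 then 0 else y (i - 1))"

definition boxFV :: "(nat \<Rightarrow> nat) \<Rightarrow> nat \<Rightarrow> (nat \<Rightarrow> nat) set" where
  "boxFV y N = PiE {0..<N} (\<lambda>i. {max (y i - 1) (prv y i + 1) .. y i})"

definition sinc :: "(nat \<Rightarrow> nat) \<Rightarrow> nat \<Rightarrow> bool" where
  "sinc y N \<longleftrightarrow> (\<forall>i j. i < j \<longrightarrow> j < N \<longrightarrow> y i < y j)"

lemma boxFV_props:
  assumes u: "u \<in> boxFV y N" and s: "sinc y N"
  shows "\<And>i. i < N \<Longrightarrow> u i \<le> y i"
    and "\<And>i. i < N \<Longrightarrow> y i \<le> u i + 1"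
    and "\<And>i. i < N \<Longrightarrow> 1 \<le> u i"
    and "\<And>i k. i < k \<Longrightarrow> k < N \<Longrightarrow> y i < u k"
    and "\<And>i k. i < k \<Longrightarrow> k < N \<Longrightarrow> u i < u k"
    and "sinc u N"
proof -
  have b: "\<And>i. i < N \<Longrightarrow> max (y i - 1) (prv y i + 1) \<le> u i \<and> u i \<le> y i"
    using u unfolding boxFV_def by (auto simp: PiE_iff)
  show 1: "\<And>i. i < N \<Longrightarrow> u i \<le> y i" using b by auto
  show "\<And>i. i < N \<Longrightarrow> y i \<le> u i + 1" using b by fastforce
  show "\<And>i. i < N \<Longrightarrow> 1 \<le> u i" using b by fastforce
  show 4: "\<And>i k. i < k \<Longrightarrow> k < N \<Longrightarrow> y i < u k"
  proof -
    fix i k assume ik: "i < k" "k < N"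
    have "y i \<le> y (k - 1)" using s ik unfolding sinc_def
      by (cases "i = k - 1") (auto intro: less_imp_le)
    moreover have "prv y k + 1 \<le> u k" using b[of k] ik by auto
    ultimately show "y i < u k" using ik by (auto simp: prv_def)
  qed
  show 5: "\<And>i k. i < k \<Longrightarrow> k < N \<Longrightarrow> u i < u k"
    using 1 4 by (meson le_less_trans less_trans)
  thus "sinc u N" unfolding sinc_def by auto
qed

lemma predsFV:
  assumes s: "sinc y N" and yb: "\<And>i. i < N \<Longrightarrow> 1 \<le> y i \<and> y i \<le> L"
  shows "{S. S \<subseteq> {1..L} \<and> stepFV L S (y ` {0..<N})} = (\<lambda>u. u ` {0..<N}) ` boxFV y N"
proof (intro equalityI subsetI)
  let ?T = "y ` {0..<N}"
  fix S assume "S \<in> {S. S \<subseteq> {1..L} \<and> stepFV L S (y ` {0..<N})}"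
  hence st: "stepFV L S ?T" and SL: "S \<subseteq> {1..L}" by auto
  have av: "\<And>x. x \<in> {1..L} \<Longrightarrow> allowed_vertex (x \<in> S) (x \<in> ?T) (x - 1 \<in> S - ?T) (x \<in> S - ?T)"
    and LST: "L \<notin> S - ?T" using st unfolding stepFV_def by auto
  have F1: "x + 1 \<in> ?T \<and> x + 1 \<notin> S" if "x \<in> S - ?T" for x
  proof -
    have "x \<in> {1..L}" using that SL by auto
    hence "x + 1 \<in> {1..L}" using LST that by (cases "x = L") auto
    from av[OF this] that show ?thesis unfolding allowed_vertex_def by auto
  qed
  have F2: "x - 1 \<in> S - ?T" if "x \<in> ?T" "x \<notin> S" for x
  proof -
    have "x \<in> {1..L}" using that yb by auto
    from av[OF this] that show ?thesis unfolding allowed_vertex_def by auto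
  qed
  define u where "u i = (if i < N then (if y i \<in> S then y i else y i - 1) else undefined)" for i
  have uS: "u i \<in> S" if "i < N" for i
    using F2[of "y i"] that by (auto simp: u_def)
  have Seq: "S = u ` {0..<N}"
  proof (intro equalityI subsetI)
    fix x assume x: "x \<in> S"
    show "x \<in> u ` {0..<N}"
    proof (cases "x \<in> ?T")
      case True
      then obtain i where "i < N" "x = y i" by auto
      thus ?thesis using x by (auto simp: u_def intro!: image_eqI[of _ _ i])
    next
      case False
      with F1[of x] x obtain i where i: "i < N" "x + 1 = y i" "y i \<notin> S" by auto
      thus ?thesis by (auto simp: u_def intro!: image_eqI[of _ _ i])
    qed
  qed (use uS in auto)
  have "u \<in> boxFV y N"
    unfolding boxFV_def PiE_iff
  proof (intro conjI ballI)
    fix i assume "i \<in> {0..<N}"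
    hence i: "i < N" by auto
    have "prv y i + 1 \<le> u i"
    proof (cases "i = 0")
      case True thus ?thesis using uS[OF i] SL by (auto simp: prv_def)
    next
      case False
      have lt: "y (i - 1) < y i" using s i False unfolding sinc_def by auto
      show ?thesis
      proof (cases "y i \<in> S")
        case True thus ?thesis using lt False by (auto simp: prv_def u_def i)
      next
        case nS: False
        have "y i - 1 \<notin> ?T" using F2[of "y i"] nS i by auto
        moreover have "y (i - 1) \<in> ?T" using i by auto
        ultimately have "y (i - 1) \<noteq> y i - 1" by metis
        thus ?thesis using lt False nS i by (auto simp: prv_def u_def)
      qed
    qed
    thus "u i \<in> {max (y i - 1) (prv y i + 1)..y i}" by (auto simp: u_def i)
  qed (auto simp: u_def extensional_def)
  thus "S \<in> (\<lambda>u. u ` {0..<N}) ` boxFV y N" using Seq by auto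
next
  let ?T = "y ` {0..<N}"
  fix S assume "S \<in> (\<lambda>u. u ` {0..<N}) ` boxFV y N"
  then obtain u where u: "u \<in> boxFV y N" and S: "S = u ` {0..<N}" by auto
  note bp = boxFV_props[OF u s]
  have SL: "S \<subseteq> {1..L}" using S bp(1,3) yb by fastforce
  have TL: "?T \<subseteq> {1..L}" using yb by fastforce
  have yinj: "\<And>i k. i < N \<Longrightarrow> k < N \<Longrightarrow> y i = y k \<Longrightarrow> i = k"
    using s unfolding sinc_def by (metis linorder_neqE_nat less_irrefl)
  have yu: "\<And>i k. i < N \<Longrightarrow> k < N \<Longrightarrow> y i = u k \<Longrightarrow> k \<le> i"
    using bp(4) by (metis leI less_irrefl)
  have uy: "\<And>i k. i < N \<Longrightarrow> k < N \<Longrightarrow> u i = y k \<Longrightarrow> i \<le> k"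
  proof (rule ccontr)
    fix i k assume "i < N" "k < N" "u i = y k" "\<not> i \<le> k"
    hence "k < i" by simp
    from bp(4)[OF this \<open>i < N\<close>] \<open>u i = y k\<close> show False by simp
  qed
  have ST: "x \<in> S - ?T \<longleftrightarrow> (\<exists>i<N. u i = y i - 1 \<and> u i \<noteq> y i \<and> x = u i)" for x
  proof
    assume "x \<in> S - ?T"
    then obtain i where i: "i < N" "x = u i" "x \<notin> ?T" using S by auto
    hence "u i \<noteq> y i" by auto
    thus "\<exists>i<N. u i = y i - 1 \<and> u i \<noteq> y i \<and> x = u i" using i bp(1,2)[of i] by (intro exI[of _ i]) auto
  next
    assume "\<exists>i<N. u i = y i - 1 \<and> u i \<noteq> y i \<and> x = u i"
    then obtain i where i: "i < N" "u i = y i - 1" "u i \<noteq> y i" "x = u i" by auto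
    have "x \<notin> ?T"
    proof
      assume "x \<in> ?T" then obtain k where k: "k < N" "x = y k" by auto
      have "i \<le> k" using uy[OF i(1) k(1)] i k by auto
      moreover have "k \<le> i" using i k yinj s unfolding sinc_def
        by (metis diff_le_self leI le_less_trans less_irrefl)
      ultimately show False using i k by auto
    qed
    moreover have "x \<in> S" using S i by (auto intro: image_eqI[of _ _ i])
    ultimately show "x \<in> S - ?T" by auto
  qed
  have TS: "x \<in> ?T - S \<longleftrightarrow> (\<exists>i<N. u i = y i - 1 \<and> u i \<noteq> y i \<and> x = y i)" for x
  proof
    assume "x \<in> ?T - S"
    then obtain i where i: "i < N" "x = y i" "x \<notin> S" by auto
    hence "u i \<noteq> y i" using S by (auto intro: image_eqI[of _ _ i])
    thus "\<exists>i<N. u i = y i - 1 \<and> u i \<noteq> y i \<and> x = y i" using i bp(1,2)[of i] by (intro exI[of _ i]) auto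
  next
    assume "\<exists>i<N. u i = y i - 1 \<and> u i \<noteq> y i \<and> x = y i"
    then obtain i where i: "i < N" "u i = y i - 1" "u i \<noteq> y i" "x = y i" by auto
    have "x \<notin> S"
    proof
      assume "x \<in> S" then obtain k where k: "k < N" "x = u k" using S by auto
      have "k \<le> i" using yu[OF i(1) k(1)] i k by auto
      moreover have "k \<noteq> i" using i k by auto
      ultimately show False using bp(1)[of k] s i k unfolding sinc_def by (metis le_neq_implies_less leD)
    qed
    thus "x \<in> ?T - S" using i by auto
  qed
  have stepm: "x + 1 \<in> ?T - S" if a: "x \<in> S - ?T" for x
  proof -
    obtain i where i: "i < N" "u i = y i - 1" "u i \<noteq> y i" "x = u i" using ST[of x, THEN iffD1, OF a] by blast
    hence "x + 1 = y i" by linarith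
    thus ?thesis using TS[of "x+1", THEN iffD2] i by blast
  qed
  have stepp: "x - 1 \<in> S - ?T \<and> 1 \<le> x" if a: "x \<in> ?T - S" for x
  proof -
    obtain i where i: "i < N" "u i = y i - 1" "u i \<noteq> y i" "x = y i" using TS[of x, THEN iffD1, OF a] by blast
    hence "x - 1 = u i" "1 \<le> x" by linarith+
    thus ?thesis using ST[of "x-1", THEN iffD2] i by blast
  qed
  have stepm': "x \<in> S - ?T \<Longrightarrow> x \<ge> 1" for x using SL by auto
  have "allowed_vertex (x \<in> S) (x \<in> ?T) (x - 1 \<in> S - ?T) (x \<in> S - ?T)" if x: "x \<in> {1..L}" for x
  proof -
    have w: "x - 1 \<in> S - ?T \<longleftrightarrow> x \<in> ?T - S"
    proof
      assume "x - 1 \<in> S - ?T"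
      from stepm[OF this] stepm'[OF this] show "x \<in> ?T - S" by simp
    next
      assume "x \<in> ?T - S" thus "x - 1 \<in> S - ?T" using stepp by auto
    qed
    show ?thesis unfolding allowed_vertex_def w by auto
  qed
  moreover have "L \<notin> S - ?T"
  proof
    assume "L \<in> S - ?T"
    from stepm[OF this] have "L + 1 \<in> ?T" by auto
    thus False using TL by auto
  qed
  ultimately show "S \<in> {S. S \<subseteq> {1..L} \<and> stepFV L S (y ` {0..<N})}"
    using SL TL unfolding stepFV_def by auto
qed

lemma boxFV_inj: assumes s: "sinc y N" and y1: "\<And>i. i < N \<Longrightarrow> 1 \<le> y i"
  shows "inj_on (\<lambda>u. u ` {0..<N}) (boxFV y N)"
proof (rule inj_onI)
  fix u v assume u: "u \<in> boxFV y N" and v: "v \<in> boxFV y N" and eq: "u ` {0..<N} = v ` {0..<N}"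
  have rec: "w i = (if y i \<in> w ` {0..<N} then y i else y i - 1)" if w: "w \<in> boxFV y N" and i: "i < N" for w i
  proof (cases "w i = y i")
    case True
    have "y i \<in> w ` {0..<N}" using i True[symmetric] by (auto intro: image_eqI[of _ _ i])
    thus ?thesis using True by auto
  next
    case False
    note bp = boxFV_props[OF w s]
    have "y i \<notin> w ` {0..<N}"
    proof
      assume "y i \<in> w ` {0..<N}"
      then obtain k where k: "k < N" "y i = w k" by auto
      show False
      proof (cases k i rule: linorder_cases)
        case less thus ?thesis using bp(1)[of k] s k i unfolding sinc_def by (metis leD)
      next
        case equal thus ?thesis using False k by auto
      next
        case greater thus ?thesis using bp(4)[of i k] k by auto
      qed
    qed
    thus ?thesis using False bp(1,2)[OF i] by auto
  qed
  show "u = v"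
  proof
    fix i show "u i = v i"
    proof (cases "i < N")
      case True thus ?thesis using rec[OF u True] rec[OF v True] eq by metis
    next
      case False thus ?thesis using u v unfolding boxFV_def by (auto simp: PiE_def extensional_def)
    qed
  qed
qed



lemma det_zero_row:
  fixes A :: "'a::comm_ring_1 mat"
  assumes A: "A \<in> carrier_mat n n" and k: "k < n" and z: "\<And>j. j < n \<Longrightarrow> A $$ (k, j) = 0"
  shows "det A = 0"
proof -
  have "det A = (\<Sum>p\<in>{p. p permutes {0..<n}}. signof p * (\<Prod>i=0..<n. A $$ (i, p i)))"
    by (rule det_def'[OF A])
  also have "\<dots> = (\<Sum>p\<in>{p. p permutes {0..<n}}. 0)"
  proof (intro sum.cong refl)
    fix p assume "p \<in> {p. p permutes {0..<n}}"
    hence "p k < n" using k by (auto dest: permutes_in_image)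
    hence "(\<Prod>i=0..<n. A $$ (i, p i)) = 0" using k z by (intro prod_zero bexI[of _ k]) auto
    thus "signof p * (\<Prod>i=0..<n. A $$ (i, p i)) = 0" by simp
  qed
  finally show ?thesis by simp
qed

lemma sinc_gap: assumes "sinc y N" "i \<le> k" "k < N" shows "y i + (k - i) \<le> y k"
  using assms(2,3)
proof (induction k)
  case 0 thus ?case by simp
next
  case (Suc k)
  show ?case
  proof (cases "i = Suc k")
    case True thus ?thesis by simp
  next
    case False
    hence "i \<le> k" using Suc by simp
    with Suc have "y i + (k - i) \<le> y k" by simp
    moreover have "y k < y (Suc k)" using assms(1) Suc unfolding sinc_def by auto
    ultimately show ?thesis using \<open>i \<le> k\<close> by simp
  qed
qed

fun cntFV :: "nat \<Rightarrow> nat \<Rightarrow> nat \<Rightarrow> nat set \<Rightarrow> nat" where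
  "cntFV L N 0 T = (if T = {1..N} then 1 else 0)"
| "cntFV L N (Suc t) T = (\<Sum>S\<in>{S. S \<subseteq> {1..L} \<and> stepFV L S T}. cntFV L N t S)"

definition FVmat :: "nat \<Rightarrow> (nat \<Rightarrow> nat) \<Rightarrow> nat \<Rightarrow> rat mat" where
  "FVmat t y N = mat N N (\<lambda>(i,j). gb (int t + int i - int j) (int (y i) - int j - 1))"

lemma FV_base:
  assumes s: "sinc y N" and yb: "\<And>i. i < N \<Longrightarrow> 1 \<le> y i"
  shows "of_nat (cntFV L N 0 (y ` {0..<N})) = det (FVmat 0 y N)"
proof (cases "\<forall>i<N. y i = i + 1")
  case True
  have "y ` {0..<N} = {1..N}"
  proof (intro equalityI subsetI)
    fix x assume "x \<in> {1..N}"
    hence "x - 1 < N" "x = y (x - 1)" using True by auto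
    thus "x \<in> y ` {0..<N}" by auto
  qed (use True in auto)
  moreover have "det (FVmat 0 y N) = 1"
  proof -
    have "diag_mat (FVmat 0 y N) = map (\<lambda>_. 1) [0..<N]"
      unfolding diag_mat_def FVmat_def using True by (auto simp: gb_def)
    moreover have "FVmat 0 y N $$ (i, j) = 0" if "i < j" "j < N" for i j
      using that True unfolding FVmat_def by (auto simp: gb_def)
    ultimately show ?thesis
      by (subst det_lower_triangular[of N], auto simp: FVmat_def map_replicate_const)
  qed
  ultimately show ?thesis by simp
next
  case False
  then obtain i where i: "i < N" "y i \<noteq> i + 1" by auto
  have ge: "k + 1 \<le> y k" if "k < N" for k
    using sinc_gap[OF s, of 0 k] yb[of 0] that by auto
  have "y i + (N - 1 - i) \<le> y (N - 1)" using sinc_gap[OF s, of i "N - 1"] i by auto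
  hence big: "N < y (N - 1)" using ge[OF i(1)] i by linarith
  have "y ` {0..<N} \<noteq> {1..N}"
  proof
    assume eq: "y ` {0..<N} = {1..N}"
    have "y (N - 1) \<in> y ` {0..<N}" using i by auto
    with eq big show False by auto
  qed
  moreover have "det (FVmat 0 y N) = 0"
    by (rule det_zero_row[of _ N "N - 1"], insert i big,
        auto simp: FVmat_def intro!: gb_zero)
  ultimately show ?thesis by simp
qed

lemma FV_entry:
  assumes s: "sinc y N" and yb: "\<And>i. i < N \<Longrightarrow> 1 \<le> y i" and i: "i < N"
  shows "(\<Sum>x\<in>{max (y i - 1) (prv y i + 1) .. y i}. gb (int t + int i - int j) (int x - int j - 1))
       = gb (int (Suc t) + int i - int j) (int (y i) - int j - 1)
         - (if 0 < i \<and> y (i - 1) + 1 = y i then gb (int (Suc t) + int (i - 1) - int j) (int (y (i - 1)) - int j - 1) else 0)"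
proof -
  let ?a = "int t + int i - int j"
  have P: "gb (int (Suc t) + int i - int j) (int (y i) - int j - 1) = gb ?a (int (y i) - int j - 1) + gb ?a (int (y i) - int j - 2)"
    using gb_pascal[of ?a "int (y i) - int j - 1"] by (simp add: algebra_simps)
  have y1: "1 \<le> y i" using yb i by auto
  show ?thesis
  proof (cases "y i - 1 < prv y i + 1")
    case True
    hence rng: "{max (y i - 1) (prv y i + 1) .. y i} = {y i}"
    proof (cases "i = 0")
      case False
      have "y (i - 1) < y i" using s i False unfolding sinc_def by auto
      thus ?thesis using True False by (auto simp: prv_def)
    qed (use y1 in \<open>auto simp: prv_def\<close>)
    show ?thesis
    proof (cases "i = 0")
      case True
      hence "y i = 1" using \<open>y i - 1 < prv y i + 1\<close> y1 by (auto simp: prv_def)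
      thus ?thesis using rng P True by simp
    next
      case False
      have "y (i - 1) < y i" using s i False unfolding sinc_def by auto
      hence e: "y (i - 1) + 1 = y i" using \<open>y i - 1 < prv y i + 1\<close> False by (auto simp: prv_def)
      have h1: "int (Suc t) + int (i - 1) - int j = ?a" using False by simp
      have h2: "int (y (i - 1)) - int j - 1 = int (y i) - int j - 2" using e by linarith
      have "(if 0 < i \<and> y (i - 1) + 1 = y i then gb (int (Suc t) + int (i - 1) - int j) (int (y (i - 1)) - int j - 1) else 0)
          = gb ?a (int (y i) - int j - 2)" using False e by (simp only: h1 h2, simp)
      thus ?thesis using rng P by simp
    qed
  next
    case False
    hence rng: "{max (y i - 1) (prv y i + 1) .. y i} = {y i - 1, y i}" using y1 by auto
    have ne: "\<not> (0 < i \<and> y (i - 1) + 1 = y i)" using False by (auto simp: prv_def)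
    have "int (y i - 1) - int j - 1 = int (y i) - int j - 2" using y1 by linarith
    moreover have "y i - 1 \<noteq> y i" using y1 by auto
    moreover have z: "(if 0 < i \<and> y (i - 1) + 1 = y i then gb (int (Suc t) + int (i - 1) - int j) (int (y (i - 1)) - int j - 1) else 0) = 0"
      by (rule if_not_P[OF ne])
    ultimately show ?thesis using rng P by (simp only: z, simp add: add.commute)
  qed
qed

lemma cntFV_det:
  assumes "sinc y N" "\<And>i. i < N \<Longrightarrow> 1 \<le> y i \<and> y i \<le> L"
  shows "of_nat (cntFV L N t (y ` {0..<N})) = det (FVmat t y N)"
  using assms
proof (induction t arbitrary: y)
  case 0 thus ?case using FV_base by auto
next
  case (Suc t)
  note s = Suc.prems(1) and yb = Suc.prems(2)
  have "cntFV L N (Suc t) (y ` {0..<N}) = (\<Sum>S\<in>(\<lambda>u. u ` {0..<N}) ` boxFV y N. cntFV L N t S)"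
    using predsFV[OF s yb] by simp
  also have "\<dots> = (\<Sum>u\<in>boxFV y N. cntFV L N t (u ` {0..<N}))"
    by (rule sum.reindex[unfolded comp_def], rule boxFV_inj[OF s], use yb in auto)
  finally have "(of_nat (cntFV L N (Suc t) (y ` {0..<N})) :: rat) = (\<Sum>u\<in>boxFV y N. of_nat (cntFV L N t (u ` {0..<N})))"
    by simp
  also have "\<dots> = (\<Sum>u\<in>boxFV y N. det (FVmat t u N))"
  proof (intro sum.cong refl Suc.IH)
    fix u assume u: "u \<in> boxFV y N"
    note bp = boxFV_props[OF u s]
    show "sinc u N" by (rule bp(6))
    fix i assume i: "i < N"
    have "u i \<le> y i" "1 \<le> u i" using bp(1)[OF i] bp(3)[OF i] by auto
    thus "1 \<le> u i \<and> u i \<le> L" using yb[OF i] by auto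
  qed
  also have "\<dots> = det (mat N N (\<lambda>(i,j). \<Sum>x\<in>{max (y i - 1) (prv y i + 1) .. y i}. gb (int t + int i - int j) (int x - int j - 1)))"
    unfolding FVmat_def boxFV_def
    by (rule det_rows_sum[where f="\<lambda>i x j. gb (int t + int i - int j) (int x - int j - 1)"]) auto
  also have "\<dots> = det (mat N N (\<lambda>(i,j). gb (int (Suc t) + int i - int j) (int (y i) - int j - 1)
         - (if 0 < i \<and> y (i - 1) + 1 = y i then gb (int (Suc t) + int (i - 1) - int j) (int (y (i - 1)) - int j - 1) else 0)))"
    using FV_entry[OF s] yb by (intro arg_cong[where f=det] eq_matI) auto
  also have "\<dots> = det (FVmat (Suc t) y N)"
    unfolding FVmat_def
    by (rule det_bidiag[where R="\<lambda>i j. gb (int (Suc t) + int i - int j) (int (y i) - int j - 1)"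
          and e="\<lambda>i. y (i - 1) + 1 = y i"])
  finally show ?case .
qed



definition HistFV :: "nat \<Rightarrow> nat \<Rightarrow> nat \<Rightarrow> nat set \<Rightarrow> (nat \<Rightarrow> nat set) set" where
  "HistFV L N t T = {X. X 0 = {1..N} \<and> X t = T \<and> (\<forall>s<t. stepFV L (X s) (X (Suc s))) \<and> (\<forall>s>t. X s = {})}"

lemma HistFV_0: "HistFV L N 0 T = (if T = {1..N} then {\<lambda>s. if s = 0 then {1..N} else {}} else {})"
proof -
  have "X \<in> HistFV L N 0 T \<longleftrightarrow> T = {1..N} \<and> X = (\<lambda>s. if s = 0 then {1..N} else {})" for X
  proof
    assume "X \<in> HistFV L N 0 T"
    hence X: "X 0 = {1..N}" "T = {1..N}" "\<And>s. s > 0 \<Longrightarrow> X s = {}" unfolding HistFV_def by auto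
    have "X s = (if s = 0 then {1..N} else {})" for s using X by (cases "s = 0") auto
    thus "T = {1..N} \<and> X = (\<lambda>s. if s = 0 then {1..N} else {})" using X by auto
  qed (auto simp: HistFV_def)
  thus ?thesis by auto
qed

lemma HistFV_Suc: "HistFV L N (Suc t) T = (\<Union>S\<in>{S. S \<subseteq> {1..L} \<and> stepFV L S T}. (\<lambda>X. X(Suc t := T)) ` HistFV L N t S)"
proof (intro equalityI subsetI)
  fix X assume X: "X \<in> HistFV L N (Suc t) T"
  let ?X' = "X(Suc t := {})"
  have st: "stepFV L (X t) T" using X unfolding HistFV_def by auto
  hence "X t \<subseteq> {1..L}" unfolding stepFV_def by auto
  moreover have "?X' \<in> HistFV L N t (X t)" using X unfolding HistFV_def
    by (auto simp: Suc_lessI)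
  moreover have "X = ?X'(Suc t := T)" using X unfolding HistFV_def by auto
  ultimately show "X \<in> (\<Union>S\<in>{S. S \<subseteq> {1..L} \<and> stepFV L S T}. (\<lambda>X. X(Suc t := T)) ` HistFV L N t S)"
    using st by blast
next
  fix X assume "X \<in> (\<Union>S\<in>{S. S \<subseteq> {1..L} \<and> stepFV L S T}. (\<lambda>X. X(Suc t := T)) ` HistFV L N t S)"
  then obtain S X' where S: "stepFV L S T" and X': "X' \<in> HistFV L N t S" and X: "X = X'(Suc t := T)" by auto
  show "X \<in> HistFV L N (Suc t) T" unfolding HistFV_def X
  proof (intro CollectI conjI allI impI)
    fix s assume "s < Suc t"
    thus "stepFV L ((X'(Suc t := T)) s) ((X'(Suc t := T)) (Suc s))"
      using X' S unfolding HistFV_def by (cases "s = t") auto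
  qed (use X' in \<open>auto simp: HistFV_def\<close>)
qed

lemma HistFV_card: "finite (HistFV L N t T) \<and> card (HistFV L N t T) = cntFV L N t T"
proof (induction t arbitrary: T)
  case 0 thus ?case by (simp add: HistFV_0)
next
  case (Suc t)
  let ?P = "{S. S \<subseteq> {1..L} \<and> stepFV L S T}"
  have finP: "finite ?P" by (rule finite_subset[of _ "Pow {1..L}"]) auto
  have inj: "inj_on (\<lambda>X. X(Suc t := T)) (HistFV L N t S)" for S
  proof (rule inj_onI)
    fix X Y assume X: "X \<in> HistFV L N t S" and Y: "Y \<in> HistFV L N t S" and eq: "X(Suc t := T) = Y(Suc t := T)"
    show "X = Y"
    proof
      fix s show "X s = Y s"
      proof (cases "s = Suc t")
        case True thus ?thesis using X Y unfolding HistFV_def by auto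
      next
        case False thus ?thesis using fun_cong[OF eq, of s] by simp
      qed
    qed
  qed
  have fin: "finite ((\<lambda>X. X(Suc t := T)) ` HistFV L N t S)" for S using Suc.IH by auto
  have disj: "((\<lambda>X. X(Suc t := T)) ` HistFV L N t S) \<inter> ((\<lambda>X. X(Suc t := T)) ` HistFV L N t S') = {}"
    if "S \<noteq> S'" for S S'
  proof -
    { fix X Y assume X: "X \<in> HistFV L N t S" and Y: "Y \<in> HistFV L N t S'" and eq: "X(Suc t := T) = Y(Suc t := T)"
      have "X t = Y t" using fun_cong[OF eq, of t] by simp
      hence False using X Y that unfolding HistFV_def by auto }
    thus ?thesis by blast
  qed
  have F: "finite (HistFV L N (Suc t) T)" unfolding HistFV_Suc using finP fin by auto
  have "card (HistFV L N (Suc t) T) = (\<Sum>S\<in>?P. card ((\<lambda>X. X(Suc t := T)) ` HistFV L N t S))"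
    unfolding HistFV_Suc by (rule card_UN_disjoint[OF finP]) (use fin disj in auto)
  also have "\<dots> = (\<Sum>S\<in>?P. cntFV L N t S)"
    by (intro sum.cong refl, subst card_image[OF inj], use Suc.IH in auto)
  finally show ?case using F by simp
qed

definition PsiFV :: "nat \<Rightarrow> (nat \<Rightarrow> nat set) \<Rightarrow> (nat \<times> nat) set \<times> (nat \<times> nat) set" where
  "PsiFV M X = ({(x,t). t \<le> M \<and> x \<in> X t}, {(x,m). 1 \<le> m \<and> m \<le> M \<and> x \<in> X (m - 1) - X m})"

lemma H_char:
  assumes fv: "four_vertex_config L M N V H" and m: "1 \<le> m" "m \<le> M"
  shows "(x, m) \<in> H \<longleftrightarrow> x \<in> {1..L} \<and> (x, m - 1) \<in> V \<and> (x, m) \<notin> V"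
proof -
  have H: "H \<subseteq> horiz_edges L M" and bd: "(0, m) \<notin> H" "(L, m) \<notin> H"
    and av: "\<And>n. n \<in> {1..L} \<Longrightarrow> allowed_vertex ((n, m - 1) \<in> V) ((n, m) \<in> V) ((n - 1, m) \<in> H) ((n, m) \<in> H)"
    using fv m unfolding four_vertex_config_def by auto
  show ?thesis
  proof (cases "x \<in> {1..L}")
    case True
    from av[OF True] have "(x, m) \<in> H \<longleftrightarrow> (x, m - 1) \<in> V \<and> (x, m) \<notin> V"
      unfolding allowed_vertex_def by auto
    moreover have "x = L \<Longrightarrow> \<not> ((x, m - 1) \<in> V \<and> (x, m) \<notin> V)" using calculation bd by auto
    ultimately show ?thesis using True bd by auto
  next
    case False
    hence "(x, m) \<notin> H" using H bd unfolding horiz_edges_def by (cases "x = 0") auto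
    thus ?thesis using False by auto
  qed
qed

lemma Z_hist:
  assumes NL: "N < L" and M1: "1 \<le> M"
  shows "{(V, H). four_vertex_config L M N V H} = PsiFV M ` HistFV L N M {L - N + 1..L}"
proof (intro equalityI subsetI)
  fix VH assume "VH \<in> {(V, H). four_vertex_config L M N V H}"
  then obtain V H where VH: "VH = (V, H)" and fv: "four_vertex_config L M N V H" by auto
  have Vs: "V \<subseteq> {1..L} \<times> {0..M}" using fv unfolding four_vertex_config_def vert_edges_def by auto
  have bd: "\<And>n. n \<in> {1..L} \<Longrightarrow> (n, 0) \<in> V \<longleftrightarrow> n \<le> N" "\<And>n. n \<in> {1..L} \<Longrightarrow> (n, M) \<in> V \<longleftrightarrow> L - N + 1 \<le> n"
    "\<And>m. m \<in> {1..M} \<Longrightarrow> (L, m) \<notin> H"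
    and av: "\<And>n m. n \<in> {1..L} \<Longrightarrow> m \<in> {1..M} \<Longrightarrow> allowed_vertex ((n, m - 1) \<in> V) ((n, m) \<in> V) ((n - 1, m) \<in> H) ((n, m) \<in> H)"
    using fv unfolding four_vertex_config_def by auto
  define X where "X t = (if t \<le> M then {x. (x, t) \<in> V} else {})" for t
  have XL: "X t \<subseteq> {1..L}" for t using Vs by (auto simp: X_def)
  have Hc: "\<And>x m. 1 \<le> m \<Longrightarrow> m \<le> M \<Longrightarrow> (x, m) \<in> H \<longleftrightarrow> x \<in> X (m - 1) - X m"
    using H_char[OF fv] Vs by (auto simp: X_def)
  have "X \<in> HistFV L N M {L - N + 1..L}"
    unfolding HistFV_def
  proof (intro CollectI conjI allI impI)
    show "X 0 = {1..N}" using bd(1) Vs NL by (auto simp: X_def)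
    show "X M = {L - N + 1..L}" using bd(2) Vs NL by (auto simp: X_def)
  next
    fix s assume s: "s < M"
    have "allowed_vertex (x \<in> X s) (x \<in> X (Suc s)) (x - 1 \<in> X s - X (Suc s)) (x \<in> X s - X (Suc s))"
      if x: "x \<in> {1..L}" for x
      using av[OF x, of "Suc s"] s Hc[of "Suc s" x] Hc[of "Suc s" "x - 1"] by (auto simp: X_def)
    moreover have "L \<notin> X s - X (Suc s)" using bd(3)[of "Suc s"] Hc[of "Suc s" L] s by auto
    ultimately show "stepFV L (X s) (X (Suc s))" unfolding stepFV_def using XL by auto
  qed (auto simp: X_def)
  moreover have "VH = PsiFV M X"
  proof -
    have Hs: "H \<subseteq> {0..L} \<times> {1..M}" using fv unfolding four_vertex_config_def horiz_edges_def by blast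
    have "V = {(x,t). t \<le> M \<and> x \<in> X t}" using Vs by (auto simp: X_def)
    moreover have "H = {(x,m). 1 \<le> m \<and> m \<le> M \<and> x \<in> X (m - 1) - X m}"
    proof (intro equalityI subsetI)
      fix p assume p: "p \<in> H"
      obtain x m where pm: "p = (x, m)" by (cases p)
      have "1 \<le> m" "m \<le> M" using Hs p pm by auto
      thus "p \<in> {(x,m). 1 \<le> m \<and> m \<le> M \<and> x \<in> X (m - 1) - X m}" using Hc[of m x] p pm by auto
    next
      fix p assume p: "p \<in> {(x,m). 1 \<le> m \<and> m \<le> M \<and> x \<in> X (m - 1) - X m}"
      obtain x m where pm: "p = (x, m)" by (cases p)
      thus "p \<in> H" using Hc[of m x] p by auto
    qed
    ultimately show ?thesis unfolding VH PsiFV_def by simp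
  qed
  ultimately show "VH \<in> PsiFV M ` HistFV L N M {L - N + 1..L}" by auto
next
  fix VH assume "VH \<in> PsiFV M ` HistFV L N M {L - N + 1..L}"
  then obtain X where X: "X \<in> HistFV L N M {L - N + 1..L}" and VH: "VH = PsiFV M X" by auto
  have X0: "X 0 = {1..N}" and XM: "X M = {L - N + 1..L}" and st: "\<And>s. s < M \<Longrightarrow> stepFV L (X s) (X (Suc s))"
    using X unfolding HistFV_def by auto
  have XL: "t \<le> M \<Longrightarrow> X t \<subseteq> {1..L}" for t
  proof (cases "t < M")
    case True thus ?thesis using st[OF True] unfolding stepFV_def by auto
  next
    case False
    assume "t \<le> M"
    hence "t = M" using False by auto
    thus ?thesis using XM by auto
  qed
  have "four_vertex_config L M N (fst (PsiFV M X)) (snd (PsiFV M X))"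
    unfolding four_vertex_config_def PsiFV_def fst_conv snd_conv
  proof (intro conjI ballI)
    show "{(x, t). t \<le> M \<and> x \<in> X t} \<subseteq> vert_edges L M" using XL unfolding vert_edges_def by auto
    show "{(x, m). 1 \<le> m \<and> m \<le> M \<and> x \<in> X (m - 1) - X m} \<subseteq> horiz_edges L M"
    proof (safe)
      fix x m assume "1 \<le> m" "m \<le> M" "x \<in> X (m - 1)"
      moreover have "X (m - 1) \<subseteq> {1..L}" using XL[of "m - 1"] \<open>m \<le> M\<close> by auto
      ultimately show "(x, m) \<in> horiz_edges L M" unfolding horiz_edges_def by auto
    qed
  next
    fix n m assume n: "n \<in> {1..L}" and m: "m \<in> {1..M}"
    have "stepFV L (X (m - 1)) (X m)" using st[of "m - 1"] m by auto
    hence "allowed_vertex (n \<in> X (m - 1)) (n \<in> X m) (n - 1 \<in> X (m - 1) - X m) (n \<in> X (m - 1) - X m)"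
      using n unfolding stepFV_def by blast
    thus "allowed_vertex ((n, m - 1) \<in> {(x, t). t \<le> M \<and> x \<in> X t}) ((n, m) \<in> {(x, t). t \<le> M \<and> x \<in> X t})
          ((n - 1, m) \<in> {(x, m). 1 \<le> m \<and> m \<le> M \<and> x \<in> X (m - 1) - X m})
          ((n, m) \<in> {(x, m). 1 \<le> m \<and> m \<le> M \<and> x \<in> X (m - 1) - X m})"
    proof -
      have "m - 1 \<le> M" using m by auto
      thus ?thesis using m \<open>allowed_vertex _ _ _ _\<close> by simp
    qed
  next
    fix n assume n: "n \<in> {1..L}"
    show "((n, 0) \<in> {(x, t). t \<le> M \<and> x \<in> X t}) = (n \<le> N)" using n X0 by auto
    show "((n, M) \<in> {(x, t). t \<le> M \<and> x \<in> X t}) = (L - N + 1 \<le> n)" using n XM by auto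
  next
    fix m assume m: "m \<in> {1..M}"
    have "stepFV L (X (m - 1)) (X m)" using st[of "m - 1"] m by auto
    hence "L \<notin> X (m - 1) - X m" "0 \<notin> X (m - 1)" unfolding stepFV_def by auto
    thus "(0, m) \<notin> {(x, m). 1 \<le> m \<and> m \<le> M \<and> x \<in> X (m - 1) - X m}"
      "(L, m) \<notin> {(x, m). 1 \<le> m \<and> m \<le> M \<and> x \<in> X (m - 1) - X m}" by auto
  qed
  thus "VH \<in> {(V, H). four_vertex_config L M N V H}" unfolding VH mem_Collect_eq case_prod_beta .
qed

lemma PsiFV_inj: "inj_on (PsiFV M) (HistFV L N M T)"
proof (rule inj_onI)
  fix X Y assume X: "X \<in> HistFV L N M T" and Y: "Y \<in> HistFV L N M T" and eq: "PsiFV M X = PsiFV M Y"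
  show "X = Y"
  proof
    fix t show "X t = Y t"
    proof (cases "t \<le> M")
      case True
      from eq have "{(x,t). t \<le> M \<and> x \<in> X t} = {(x,t). t \<le> M \<and> x \<in> Y t}" unfolding PsiFV_def by simp
      thus ?thesis using True by (auto simp: set_eq_iff)
    next
      case False thus ?thesis using X Y unfolding HistFV_def by auto
    qed
  qed
qed

lemma Z_det:
  assumes "N < L" "1 \<le> M"
  shows "(of_nat (Z L M N) :: rat) = det (FVmat M (\<lambda>i. L - N + i + 1) N)"
proof -
  have "Z L M N = card (HistFV L N M {L - N + 1..L})"
    unfolding Z_def Z_hist[OF assms] by (rule card_image[OF PsiFV_inj])
  also have "\<dots> = cntFV L N M {L - N + 1..L}" using HistFV_card by auto
  also have "{L - N + 1..L} = (\<lambda>i. L - N + i + 1) ` {0..<N}"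
  proof (intro equalityI subsetI)
    fix x assume x: "x \<in> {L - N + 1..L}"
    hence "x = L - N + (x - (L - N + 1)) + 1" "x - (L - N + 1) < N" using assms by auto
    thus "x \<in> (\<lambda>i. L - N + i + 1) ` {0..<N}" by (metis atLeastLessThan_iff image_eqI zero_le)
  qed (use assms in auto)
  finally have "Z L M N = cntFV L N M ((\<lambda>i. L - N + i + 1) ` {0..<N})" .
  moreover have "sinc (\<lambda>i. L - N + i + 1) N" unfolding sinc_def by auto
  ultimately show ?thesis using cntFV_det[of "\<lambda>i. L - N + i + 1" N L M] assms by auto
qed



definition stp :: "nat \<times> nat \<Rightarrow> nat \<times> nat \<Rightarrow> bool" where
  "stp a b \<longleftrightarrow> b = (fst a + 1, snd a) \<or> b = (fst a, snd a + 1)"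

definition le2 :: "nat \<times> nat \<Rightarrow> nat \<times> nat \<Rightarrow> bool" where
  "le2 a b \<longleftrightarrow> fst a \<le> fst b \<and> snd a \<le> snd b"

lemma urp_iff: "up_right_path p \<longleftrightarrow> p \<noteq> [] \<and> successively stp p"
  unfolding up_right_path_def successively_conv_nth stp_def by auto

definition seg :: "nat \<Rightarrow> nat \<Rightarrow> nat \<Rightarrow> (nat \<times> nat) list" where
  "seg u w r = map (\<lambda>x. (x, r)) [u..<Suc w]"

lemma seg_props:
  assumes "u \<le> w"
  shows "seg u w r \<noteq> []" "hd (seg u w r) = (u, r)" "last (seg u w r) = (w, r)"
    "set (seg u w r) = {u..w} \<times> {r}"
proof -
  show "seg u w r \<noteq> []" using assms by (simp add: seg_def)
  show "hd (seg u w r) = (u, r)" unfolding seg_def using assms by (subst upt_conv_Cons) auto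
  show "last (seg u w r) = (w, r)" using assms by (simp add: seg_def last_map)
  show "set (seg u w r) = {u..w} \<times> {r}" by (auto simp: seg_def)
qed

lemma seg_succ: "successively stp (seg u w r)"
  unfolding seg_def successively_conv_nth stp_def by (auto simp: nth_append)

lemma seg_Suc: "u \<le> Suc w \<Longrightarrow> seg u (Suc w) r = seg u w r @ [(Suc w, r)]"
  by (simp add: seg_def)

lemma seg_single: "seg u u r = [(u, r)]" by (simp add: seg_def)

lemma succ_last_le: "successively stp (xs @ [x]) \<Longrightarrow> z \<in> set (xs @ [x]) \<Longrightarrow> le2 z x"
proof (induction xs arbitrary: x z rule: rev_induct)
  case Nil thus ?case by (simp add: le2_def)
next
  case (snoc y ys)
  have s: "successively stp (ys @ [y])" and st: "stp y x"
    using snoc.prems(1) by (auto simp: successively_append_iff)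
  have ly: "le2 y x" using st by (auto simp: stp_def le2_def)
  show ?case
  proof (cases "z = x")
    case True thus ?thesis by (simp add: le2_def)
  next
    case False
    hence "z \<in> set (ys @ [y])" using snoc.prems(2) by auto
    from snoc.IH[OF s this] ly show ?thesis by (auto simp: le2_def)
  qed
qed

lemma succ_last_le': "successively stp xs \<Longrightarrow> xs \<noteq> [] \<Longrightarrow> z \<in> set xs \<Longrightarrow> le2 z (last xs)"
  using succ_last_le[of "butlast xs" "last xs" z] by (simp add: snoc_eq_iff_butlast)

lemma row_path:
  assumes "successively stp p" "p \<noteq> []" "\<forall>z\<in>set p. snd z = c"
  shows "p = seg (fst (hd p)) (fst (last p)) c \<and> fst (hd p) \<le> fst (last p)"
  using assms
proof (induction p rule: rev_induct)
  case Nil thus ?case by simp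
next
  case (snoc x xs)
  show ?case
  proof (cases "xs = []")
    case True thus ?thesis using snoc.prems by (cases x) (simp add: seg_single)
  next
    case False
    have s: "successively stp xs" and st: "stp (last xs) x"
      using snoc.prems(1) False by (auto simp: successively_append_iff)
    have IH: "xs = seg (fst (hd xs)) (fst (last xs)) c \<and> fst (hd xs) \<le> fst (last xs)"
      using snoc.IH[OF s False] snoc.prems(3) by auto
    have "snd (last xs) = c" "snd x = c" using snoc.prems(3) False by auto
    hence x: "x = (Suc (fst (last xs)), c)" using st unfolding stp_def by auto
    show ?thesis using IH x False by (simp add: seg_Suc)
  qed
qed

lemma decomp:
  assumes "successively stp q" "q \<noteq> []" "snd (hd q) \<le> r" "snd (last q) = Suc r"
    "\<forall>z\<in>set q. snd z \<le> Suc r"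
  shows "\<exists>p u. q = p @ seg u (fst (last q)) (Suc r) \<and> p \<noteq> [] \<and> successively stp p \<and>
     last p = (u, r) \<and> u \<le> fst (last q) \<and> hd p = hd q"
  using assms
proof (induction q rule: rev_induct)
  case Nil thus ?case by simp
next
  case (snoc z q')
  show ?case
  proof (cases "q' = []")
    case True thus ?thesis using snoc.prems by simp
  next
    case False
    let ?y = "last q'"
    have s: "successively stp q'" and st: "stp ?y z"
      using snoc.prems(1) False by (auto simp: successively_append_iff)
    have zr: "snd z = Suc r" using snoc.prems(4) by simp
    show ?thesis
    proof (cases "snd ?y = Suc r")
      case True
      have "?y \<in> set q'" using False by simp
      from snoc.IH[OF s False] snoc.prems(3,5) True False
      obtain p u where p: "q' = p @ seg u (fst ?y) (Suc r)" "p \<noteq> []" "successively stp p"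
        "last p = (u, r)" "u \<le> fst ?y" "hd p = hd q'" by auto
      have z: "z = (Suc (fst ?y), Suc r)" using st zr True unfolding stp_def by auto
      have eq: "q' @ [z] = p @ seg u (Suc (fst ?y)) (Suc r)" using p(1,5) z by (simp add: seg_Suc)
      have lq: "fst (last (q' @ [z])) = Suc (fst ?y)" using z by simp
      have hq: "hd (q' @ [z]) = hd p" using p(6) False by simp
      show ?thesis unfolding lq hq using eq p(2-5) by (intro exI[of _ p] exI[of _ u]) auto
    next
      case False2: False
      have z: "z = (fst ?y, Suc r)" "snd ?y = r" using st zr False2 unfolding stp_def by auto
      have eq: "q' @ [z] = q' @ seg (fst ?y) (fst (last (q' @ [z]))) (Suc r)" using z by (simp add: seg_single)
      have ly: "last q' = (fst ?y, r)" using z(2) by (simp add: prod_eq_iff)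
      have lz: "fst (last (q' @ [z])) = fst ?y" using z by simp
      show ?thesis unfolding lz
      proof (intro exI[of _ q'] exI[of _ "fst ?y"] conjI)
        show "q' @ [z] = q' @ seg (fst ?y) (fst ?y) (Suc r)" using z by (simp add: seg_single)
      qed (use False s ly in auto)
    qed
  qed
qed



definition PT :: "nat \<Rightarrow> nat \<Rightarrow> nat \<Rightarrow> (nat \<Rightarrow> nat) \<Rightarrow> (nat \<Rightarrow> (nat \<times> nat) list) set" where
  "PT L N r w = {P.
     (\<forall>j\<in>{1..N}. up_right_path (P j) \<and> set (P j) \<subseteq> {1..L} \<times> {1..r} \<and>
                  hd (P j) = (j, 1) \<and> last (P j) = (w j, r)) \<and>
     (\<forall>j. j \<notin> {1..N} \<longrightarrow> P j = []) \<and>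
     (\<forall>i\<in>{1..N}. \<forall>j\<in>{1..N}. i \<noteq> j \<longrightarrow> set (P i) \<inter> set (P j) = {})}"

lemma path_tuples_PT: "path_tuples L K N = PT L N K (\<lambda>j. L - N + j)"
  unfolding path_tuples_def PT_def by simp

definition lo :: "(nat \<Rightarrow> nat) \<Rightarrow> nat \<Rightarrow> nat" where
  "lo w j = (if j = 1 then 1 else w (j - 1) + 1)"

definition boxP :: "nat \<Rightarrow> (nat \<Rightarrow> nat) \<Rightarrow> (nat \<Rightarrow> nat) set" where
  "boxP N w = PiE {1..N} (\<lambda>j. {lo w j .. w j})"

definition sinc1 :: "(nat \<Rightarrow> nat) \<Rightarrow> nat \<Rightarrow> bool" where
  "sinc1 w N \<longleftrightarrow> (\<forall>i j. 1 \<le> i \<longrightarrow> i < j \<longrightarrow> j \<le> N \<longrightarrow> w i < w j)"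

definition extP :: "nat \<Rightarrow> nat \<Rightarrow> (nat \<Rightarrow> nat) \<Rightarrow> (nat \<Rightarrow> nat) \<Rightarrow> (nat \<Rightarrow> (nat \<times> nat) list) \<Rightarrow> (nat \<Rightarrow> (nat \<times> nat) list)" where
  "extP N r w u P = (\<lambda>j. if j \<in> {1..N} then P j @ seg (u j) (w j) (Suc r) else [])"

lemma boxP_props:
  assumes u: "u \<in> boxP N w" and s: "sinc1 w N"
  shows "\<And>j. j \<in> {1..N} \<Longrightarrow> 1 \<le> u j \<and> u j \<le> w j"
    and "\<And>i j. i \<in> {1..N} \<Longrightarrow> j \<in> {1..N} \<Longrightarrow> i < j \<Longrightarrow> w i < u j"
    and "sinc1 u N"
proof -
  have b: "\<And>j. j \<in> {1..N} \<Longrightarrow> lo w j \<le> u j \<and> u j \<le> w j" using u unfolding boxP_def by auto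
  have l1: "1 \<le> lo w j" for j unfolding lo_def by auto
  show 1: "\<And>j. j \<in> {1..N} \<Longrightarrow> 1 \<le> u j \<and> u j \<le> w j" using b l1 le_trans by blast
  show 2: "\<And>i j. i \<in> {1..N} \<Longrightarrow> j \<in> {1..N} \<Longrightarrow> i < j \<Longrightarrow> w i < u j"
  proof -
    fix i j assume ij: "i \<in> {1..N}" "j \<in> {1..N}" "i < j"
    have "w i \<le> w (j - 1)" using s ij unfolding sinc1_def by (cases "i = j - 1") (auto intro: less_imp_le)
    moreover have "w (j - 1) + 1 \<le> u j" using b[OF ij(2)] ij unfolding lo_def by auto
    ultimately show "w i < u j" by simp
  qed
  show "sinc1 u N" unfolding sinc1_def
  proof (intro allI impI)
    fix i j assume a: "1 \<le> i" "i < j" "j \<le> N"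
    hence ij: "i \<in> {1..N}" "j \<in> {1..N}" by auto
    have "u i \<le> w i" using 1[OF ij(1)] by simp
    also have "w i < u j" using 2[OF ij a(2)] .
    finally show "u i < u j" .
  qed
qed

lemma ext_in_PT:
  assumes s: "sinc1 w N" and wL: "\<And>j. j \<in> {1..N} \<Longrightarrow> w j \<le> L"
    and u: "u \<in> boxP N w" and P: "P \<in> PT L N r u"
  shows "extP N r w u P \<in> PT L N (Suc r) w"
proof -
  note bp = boxP_props[OF u s]
  have Pj: "\<And>j. j \<in> {1..N} \<Longrightarrow> up_right_path (P j) \<and> set (P j) \<subseteq> {1..L} \<times> {1..r} \<and>
                  hd (P j) = (j, 1) \<and> last (P j) = (u j, r)"
    and Po: "\<And>j. j \<notin> {1..N} \<Longrightarrow> P j = []"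
    and Pd: "\<And>i j. i \<in> {1..N} \<Longrightarrow> j \<in> {1..N} \<Longrightarrow> i \<noteq> j \<Longrightarrow> set (P i) \<inter> set (P j) = {}"
    using P unfolding PT_def by auto
  have setQ: "set (extP N r w u P j) = set (P j) \<union> {u j..w j} \<times> {Suc r}" if j: "j \<in> {1..N}" for j
    using seg_props(4)[of "u j" "w j" "Suc r"] bp(1)[OF j] j by (simp add: extP_def)
  show ?thesis unfolding PT_def
  proof (intro CollectI conjI ballI allI impI)
    fix j assume j: "j \<in> {1..N}"
    have ne: "P j \<noteq> []" and sp: "successively stp (P j)" using Pj[OF j] by (auto simp: urp_iff)
    have uw: "u j \<le> w j" using bp(1)[OF j] by auto
    have Q: "extP N r w u P j = P j @ seg (u j) (w j) (Suc r)" using j by (simp add: extP_def)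
    show "up_right_path (extP N r w u P j)" unfolding Q urp_iff
      using ne sp seg_succ[of "u j" "w j" "Suc r"] seg_props[OF uw] Pj[OF j]
      by (auto simp: successively_append_iff stp_def)
    show "set (extP N r w u P j) \<subseteq> {1..L} \<times> {1..Suc r}" unfolding setQ[OF j]
      using Pj[OF j] bp(1)[OF j] wL[OF j] by auto
    show "hd (extP N r w u P j) = (j, 1)" unfolding Q using ne Pj[OF j] by simp
    show "last (extP N r w u P j) = (w j, Suc r)" unfolding Q using seg_props[OF uw] by simp
  next
    fix j assume jn: "j \<notin> {1..N}" show "extP N r w u P j = []" using jn by (auto simp: extP_def)
  next
    fix i j assume i: "i \<in> {1..N}" and j: "j \<in> {1..N}" and ij: "i \<noteq> j"
    have r1: "set (P i) \<inter> {u j..w j} \<times> {Suc r} = {}" "set (P j) \<inter> {u i..w i} \<times> {Suc r} = {}"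
      using Pj[OF i] Pj[OF j] by auto
    have r2: "{u i..w i} \<inter> {u j..w j} = {}"
    proof (cases "i < j")
      case True thus ?thesis using bp(2)[OF i j] by auto
    next
      case False hence "j < i" using ij by auto
      thus ?thesis using bp(2)[OF j i] by auto
    qed
    show "set (extP N r w u P i) \<inter> set (extP N r w u P j) = {}"
      unfolding setQ[OF i] setQ[OF j] using Pd[OF i j ij] r1 r2 by auto
  qed
qed

lemma ext_inj:
  assumes s: "sinc1 w N"
  shows "inj_on (\<lambda>(u, P). extP N r w u P) (Sigma (boxP N w) (\<lambda>u. PT L N r u))"
proof (rule inj_onI, clarsimp)
  fix u P u' P' assume u: "u \<in> boxP N w" and P: "P \<in> PT L N r u"
    and u': "u' \<in> boxP N w" and P': "P' \<in> PT L N r u'" and eq: "extP N r w u P = extP N r w u' P'"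
  have key: "u j = u' j \<and> P j = P' j" if j: "j \<in> {1..N}" for j
  proof -
    have e: "P j @ seg (u j) (w j) (Suc r) = P' j @ seg (u' j) (w j) (Suc r)"
      using fun_cong[OF eq, of j] j by (simp add: extP_def)
    have r1: "set (P j) \<subseteq> UNIV \<times> {1..r}" "set (P' j) \<subseteq> UNIV \<times> {1..r}"
      using P P' j unfolding PT_def by auto
    have uw: "u j \<le> w j" "u' j \<le> w j" using boxP_props(1)[OF u s j] boxP_props(1)[OF u' s j] by auto
    have "{x. (x, Suc r) \<in> set (P j @ seg (u j) (w j) (Suc r))} = {u j..w j}"
      using r1 seg_props(4)[OF uw(1)] by auto
    moreover have "{x. (x, Suc r) \<in> set (P' j @ seg (u' j) (w j) (Suc r))} = {u' j..w j}"
      using r1 seg_props(4)[OF uw(2)] by auto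
    ultimately have "{u j..w j} = {u' j..w j}" using e by simp
    hence "u j \<in> {u' j..w j}" "u' j \<in> {u j..w j}" using uw by (simp_all only: atLeastAtMost_iff, auto)
    hence "u j = u' j" by auto
    thus ?thesis using e by simp
  qed
  show "u = u' \<and> P = P'"
  proof
    show "u = u'"
    proof
      fix j show "u j = u' j"
        using key[of j] u u' unfolding boxP_def by (cases "j \<in> {1..N}") (auto simp: PiE_def extensional_def)
    qed
    show "P = P'"
    proof
      fix j show "P j = P' j"
        using key[of j] P P' unfolding PT_def by (cases "j \<in> {1..N}") auto
    qed
  qed
qed



lemma PT_Suc:
  assumes s: "sinc1 w N" and wL: "\<And>j. j \<in> {1..N} \<Longrightarrow> w j \<le> L" and r: "1 \<le> r"
  shows "PT L N (Suc r) w = (\<lambda>(u, P). extP N r w u P) ` Sigma (boxP N w) (\<lambda>u. PT L N r u)"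
proof (intro equalityI subsetI)
  fix Q assume Q: "Q \<in> PT L N (Suc r) w"
  have Qj: "\<And>j. j \<in> {1..N} \<Longrightarrow> up_right_path (Q j) \<and> set (Q j) \<subseteq> {1..L} \<times> {1..Suc r} \<and>
                  hd (Q j) = (j, 1) \<and> last (Q j) = (w j, Suc r)"
    and Qo: "\<And>j. j \<notin> {1..N} \<Longrightarrow> Q j = []"
    and Qd: "\<And>i j. i \<in> {1..N} \<Longrightarrow> j \<in> {1..N} \<Longrightarrow> i \<noteq> j \<Longrightarrow> set (Q i) \<inter> set (Q j) = {}"
    using Q unfolding PT_def by auto
  have ex: "\<forall>j\<in>{1..N}. \<exists>pu. Q j = fst pu @ seg (snd pu) (w j) (Suc r) \<and> fst pu \<noteq> [] \<and>
      successively stp (fst pu) \<and> last (fst pu) = (snd pu, r) \<and> snd pu \<le> w j \<and> hd (fst pu) = hd (Q j)"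
  proof
    fix j assume j: "j \<in> {1..N}"
    have a: "successively stp (Q j)" "Q j \<noteq> []" using Qj[OF j] by (auto simp: urp_iff)
    have b: "snd (hd (Q j)) \<le> r" "snd (last (Q j)) = Suc r" using Qj[OF j] r by auto
    have c: "\<forall>z\<in>set (Q j). snd z \<le> Suc r" using Qj[OF j] by auto
    from decomp[OF a b c] obtain p u where "Q j = p @ seg u (fst (last (Q j))) (Suc r) \<and> p \<noteq> [] \<and> successively stp p \<and>
       last p = (u, r) \<and> u \<le> fst (last (Q j)) \<and> hd p = hd (Q j)" by blast
    thus "\<exists>pu. Q j = fst pu @ seg (snd pu) (w j) (Suc r) \<and> fst pu \<noteq> [] \<and>
      successively stp (fst pu) \<and> last (fst pu) = (snd pu, r) \<and> snd pu \<le> w j \<and> hd (fst pu) = hd (Q j)"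
      using Qj[OF j] by (intro exI[of _ "(p, u)"]) auto
  qed
  from bchoice[OF ex] obtain f where f: "\<forall>j\<in>{1..N}. Q j = fst (f j) @ seg (snd (f j)) (w j) (Suc r) \<and> fst (f j) \<noteq> [] \<and>
      successively stp (fst (f j)) \<and> last (fst (f j)) = (snd (f j), r) \<and> snd (f j) \<le> w j \<and> hd (fst (f j)) = hd (Q j)"
    by blast
  define u where "u = restrict (\<lambda>j. snd (f j)) {1..N}"
  define P where "P j = (if j \<in> {1..N} then fst (f j) else [])" for j
  have fj: "Q j = fst (f j) @ seg (snd (f j)) (w j) (Suc r)" "fst (f j) \<noteq> []" "successively stp (fst (f j))"
    "last (fst (f j)) = (snd (f j), r)" "snd (f j) \<le> w j" "hd (fst (f j)) = hd (Q j)"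
    if "j \<in> {1..N}" for j using f that by blast+
  have Pu: "P j = fst (f j)" "u j = snd (f j)" if "j \<in> {1..N}" for j using that by (simp_all add: P_def u_def)
  have Qeq: "Q j = P j @ seg (u j) (w j) (Suc r)" if j: "j \<in> {1..N}" for j
    unfolding Pu[OF j] by (rule fj(1)[OF j])
  have Psub: "set (P j) \<subseteq> set (Q j)" if j: "j \<in> {1..N}" for j using Qeq[OF j] by auto
  have Plast: "last (P j) = (u j, r)" "P j \<noteq> []" "successively stp (P j)" "hd (P j) = (j, 1)" "u j \<le> w j"
    if j: "j \<in> {1..N}" for j unfolding Pu[OF j] using fj[OF j] Qj[OF j] by simp_all
  have Prow: "set (P j) \<subseteq> {1..L} \<times> {1..r}" if j: "j \<in> {1..N}" for j
  proof
    fix z assume z: "z \<in> set (P j)"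
    have "le2 z (last (P j))" by (rule succ_last_le'[OF Plast(3)[OF j] Plast(2)[OF j] z])
    hence "snd z \<le> r" using Plast(1)[OF j] by (simp add: le2_def)
    moreover have "z \<in> {1..L} \<times> {1..Suc r}" using z Psub[OF j] Qj[OF j] by auto
    ultimately show "z \<in> {1..L} \<times> {1..r}" by auto
  qed
  have ub: "u \<in> boxP N w" unfolding boxP_def
  proof (rule PiE_I)
    fix j assume j: "j \<in> {1..N}"
    have "lo w j \<le> u j"
    proof (cases "j = 1")
      case True
      have "(u j, r) \<in> set (P j)" using Plast[OF j] last_in_set by metis
      thus ?thesis using Prow[OF j] True by (auto simp: lo_def)
    next
      case False
      hence j1: "j - 1 \<in> {1..N}" "j - 1 \<noteq> j" using j by auto
      have lt: "w (j - 1) < w j" using s j False unfolding sinc1_def by auto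
      show ?thesis
      proof (rule ccontr)
        assume "\<not> lo w j \<le> u j"
        hence "u j \<le> w (j - 1)" using False by (auto simp: lo_def)
        hence "(w (j - 1), Suc r) \<in> set (Q j)" using Qeq[OF j] lt seg_props(4)[OF Plast(5)[OF j]] by auto
        moreover have "(w (j - 1), Suc r) \<in> set (Q (j - 1))" using Qj[OF j1(1)] last_in_set[of "Q (j - 1)"]
          by (metis urp_iff)
        ultimately show False using Qd[OF j1(1) j] j1(2) by auto
      qed
    qed
    thus "u j \<in> {lo w j..w j}" using Plast(5)[OF j] by auto
  qed (auto simp: u_def)
  have PP: "P \<in> PT L N r u" unfolding PT_def
  proof (intro CollectI conjI ballI allI impI)
    fix j assume j: "j \<in> {1..N}"
    show "up_right_path (P j)" using Plast[OF j] by (simp add: urp_iff)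
    show "set (P j) \<subseteq> {1..L} \<times> {1..r}" by (rule Prow[OF j])
    show "hd (P j) = (j, 1)" "last (P j) = (u j, r)" using Plast[OF j] by auto
  next
    fix j assume "j \<notin> {1..N}" thus "P j = []" by (auto simp: P_def)
  next
    fix i j assume "i \<in> {1..N}" "j \<in> {1..N}" "i \<noteq> j"
    thus "set (P i) \<inter> set (P j) = {}" using Qd Psub by blast
  qed
  have "Q = extP N r w u P"
  proof
    fix j show "Q j = extP N r w u P j" using Qeq Qo by (cases "j \<in> {1..N}") (auto simp: extP_def)
  qed
  thus "Q \<in> (\<lambda>(u, P). extP N r w u P) ` Sigma (boxP N w) (\<lambda>u. PT L N r u)"
    using ub PP by auto
next
  fix Q assume "Q \<in> (\<lambda>(u, P). extP N r w u P) ` Sigma (boxP N w) (\<lambda>u. PT L N r u)"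
  then obtain u P where "u \<in> boxP N w" "P \<in> PT L N r u" "Q = extP N r w u P" by auto
  thus "Q \<in> PT L N (Suc r) w" using ext_in_PT[OF s wL] by auto
qed

definition canon :: "nat \<Rightarrow> (nat \<Rightarrow> nat) \<Rightarrow> (nat \<Rightarrow> (nat \<times> nat) list)" where
  "canon N w = (\<lambda>j. if j \<in> {1..N} then seg j (w j) 1 else [])"

lemma PT_1:
  assumes s: "sinc1 w N" and wL: "\<And>j. j \<in> {1..N} \<Longrightarrow> w j \<le> L"
  shows "PT L N 1 w = (if \<forall>j\<in>{1..N}. lo w j \<le> j \<and> j \<le> w j then {canon N w} else {})"
proof -
  have sub: "PT L N 1 w \<subseteq> {canon N w}" and jw: "\<And>Q j. Q \<in> PT L N 1 w \<Longrightarrow> j \<in> {1..N} \<Longrightarrow> j \<le> w j"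
  proof -
    { fix Q j assume Q: "Q \<in> PT L N 1 w" and j: "j \<in> {1..N}"
      have Qj: "up_right_path (Q j)" "set (Q j) \<subseteq> {1..L} \<times> {1..1}" "hd (Q j) = (j, 1)" "last (Q j) = (w j, 1)"
        using Q j unfolding PT_def by auto
      have rows: "\<forall>z\<in>set (Q j). snd z = 1" using Qj(2) by auto
      have "Q j = seg (fst (hd (Q j))) (fst (last (Q j))) 1 \<and> fst (hd (Q j)) \<le> fst (last (Q j))"
        using row_path[OF _ _ rows] Qj(1) by (auto simp: urp_iff)
      hence "Q j = seg j (w j) 1 \<and> j \<le> w j" using Qj(3,4) by simp
    } note * = this
    show "\<And>Q j. Q \<in> PT L N 1 w \<Longrightarrow> j \<in> {1..N} \<Longrightarrow> j \<le> w j" using * by blast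
    show "PT L N 1 w \<subseteq> {canon N w}"
    proof
      fix Q assume Q: "Q \<in> PT L N 1 w"
      have "Q = canon N w"
      proof
        fix j show "Q j = canon N w j" using *[OF Q, of j] Q unfolding canon_def PT_def by auto
      qed
      thus "Q \<in> {canon N w}" by simp
    qed
  qed
  show ?thesis
  proof (cases "\<forall>j\<in>{1..N}. lo w j \<le> j \<and> j \<le> w j")
    case True
    have "canon N w \<in> PT L N 1 w" unfolding PT_def
    proof (intro CollectI conjI ballI allI impI)
      fix j assume j: "j \<in> {1..N}"
      have jw: "j \<le> w j" using True j by auto
      show "up_right_path (canon N w j)" using j seg_succ seg_props[OF jw] by (simp add: canon_def urp_iff)
      show "set (canon N w j) \<subseteq> {1..L} \<times> {1..1}" using j seg_props(4)[OF jw] wL[OF j] by (auto simp: canon_def)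
      show "hd (canon N w j) = (j, 1)" "last (canon N w j) = (w j, 1)" using j seg_props[OF jw] by (auto simp: canon_def)
    next
      fix j assume "j \<notin> {1..N}" thus "canon N w j = []" by (auto simp: canon_def)
    next
      fix i j assume i: "i \<in> {1..N}" and j: "j \<in> {1..N}" and ij: "i \<noteq> j"
      have iw: "i \<le> w i" and jw: "j \<le> w j" using True i j by auto
      have d: "{a..w a} \<inter> {b..w b} = {}" if a: "a \<in> {1..N}" "b \<in> {1..N}" "a < b" for a b
      proof -
        have "w a \<le> w (b - 1)" using s a unfolding sinc1_def by (cases "a = b - 1") (auto intro: less_imp_le)
        moreover have "w (b - 1) < b"
        proof -
          have "lo w b \<le> b" using True a(2) by blast
          moreover have "b \<noteq> 1" using a by auto
          ultimately show ?thesis unfolding lo_def by auto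
        qed
        ultimately show ?thesis using a by auto
      qed
      have "{i..w i} \<inter> {j..w j} = {}"
      proof (cases "i < j")
        case True thus ?thesis using d[OF i j True] by auto
      next
        case False hence "j < i" using ij by auto
        thus ?thesis using d[OF j i] by blast
      qed
      thus "set (canon N w i) \<inter> set (canon N w j) = {}"
        using i j seg_props(4)[OF iw] seg_props(4)[OF jw] by (auto simp: canon_def)
    qed
    thus ?thesis using sub True by auto
  next
    case False
    then obtain j where j: "j \<in> {1..N}" "\<not> (lo w j \<le> j \<and> j \<le> w j)" by blast
    have "PT L N 1 w = {}"
    proof (rule ccontr)
      assume "PT L N 1 w \<noteq> {}"
      then obtain Q where Q: "Q \<in> PT L N 1 w" by auto
      hence jw: "j \<le> w j" using jw j by auto
      hence "lo w j > j" using j by auto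
      hence j1: "j \<noteq> 1" "j \<le> w (j - 1)" unfolding lo_def by (auto split: if_splits)
      have j1': "j - 1 \<in> {1..N}" using j j1 by auto
      have "Q (j - 1) = canon N w (j - 1)" "Q j = canon N w j" using sub Q by auto
      hence "(j, 1) \<in> set (Q (j - 1))" "(j, 1) \<in> set (Q j)" using j1 j1' j jw
        seg_props(4)[of "j - 1" "w (j - 1)" 1] seg_props(4)[of j "w j" 1] by (auto simp: canon_def)
      moreover have "set (Q (j - 1)) \<inter> set (Q j) = {}"
      proof -
        have dj: "\<forall>i\<in>{1..N}. \<forall>j\<in>{1..N}. i \<noteq> j \<longrightarrow> set (Q i) \<inter> set (Q j) = {}"
          using Q unfolding PT_def by blast
        have "j - 1 \<noteq> j" using j by auto
        thus ?thesis using dj j1' j(1) by blast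
      qed
      ultimately show False by auto
    qed
    thus ?thesis using False by auto
  qed
qed

fun Dp :: "nat \<Rightarrow> nat \<Rightarrow> (nat \<Rightarrow> nat) \<Rightarrow> nat" where
  "Dp N 0 w = (if \<forall>j\<in>{1..N}. w j = j then 1 else 0)"
| "Dp N (Suc r) w = (\<Sum>u\<in>boxP N w. Dp N r u)"

lemma Dp_1: "Dp N 1 w = (if \<forall>j\<in>{1..N}. lo w j \<le> j \<and> j \<le> w j then 1 else 0)"
proof -
  have "Dp N 1 w = (\<Sum>u\<in>boxP N w. if \<forall>j\<in>{1..N}. u j = j then 1 else 0)" by simp
  also have "\<dots> = card {u\<in>boxP N w. \<forall>j\<in>{1..N}. u j = j}"
  proof -
    have fin: "finite (boxP N w)" unfolding boxP_def by (rule finite_PiE) auto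
    show ?thesis using sum.inter_filter[OF fin, of "\<lambda>_. 1::nat" "\<lambda>u. \<forall>j\<in>{1..N}. u j = j"]
      by simp
  qed
  also have "{u\<in>boxP N w. \<forall>j\<in>{1..N}. u j = j} =
      (if \<forall>j\<in>{1..N}. lo w j \<le> j \<and> j \<le> w j then {restrict (\<lambda>j. j) {1..N}} else {})"
  proof (cases "\<forall>j\<in>{1..N}. lo w j \<le> j \<and> j \<le> w j")
    case True
    show ?thesis
    proof (intro equalityI subsetI)
      fix u assume "u \<in> {u\<in>boxP N w. \<forall>j\<in>{1..N}. u j = j}"
      hence "u \<in> extensional {1..N}" "\<forall>j\<in>{1..N}. u j = j" unfolding boxP_def by (auto simp: PiE_def)
      hence "u = restrict (\<lambda>j. j) {1..N}" by (auto simp: extensional_def restrict_def)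
      thus "u \<in> (if \<forall>j\<in>{1..N}. lo w j \<le> j \<and> j \<le> w j then {restrict (\<lambda>j. j) {1..N}} else {})" using True by simp
    qed (use True in \<open>auto simp: boxP_def\<close>)
  next
    case False
    then obtain j where j: "j \<in> {1..N}" "\<not> (lo w j \<le> j \<and> j \<le> w j)" by blast
    have "{u\<in>boxP N w. \<forall>j\<in>{1..N}. u j = j} = {}"
    proof (rule ccontr)
      assume "{u\<in>boxP N w. \<forall>j\<in>{1..N}. u j = j} \<noteq> {}"
      then obtain u where "u \<in> boxP N w" "\<forall>j\<in>{1..N}. u j = j" by blast
      hence "u j \<in> {lo w j..w j}" "u j = j" using j(1) unfolding boxP_def by (auto simp: PiE_iff)
      thus False using j(2) by auto
    qed
    thus ?thesis unfolding if_not_P[OF False] .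
  qed
  finally show ?thesis by simp
qed

lemma PT_card:
  assumes "1 \<le> r" "sinc1 w N" "\<And>j. j \<in> {1..N} \<Longrightarrow> w j \<le> L"
  shows "finite (PT L N r w) \<and> card (PT L N r w) = Dp N r w"
  using assms
proof (induction r arbitrary: w rule: nat_induct_at_least)
  case base
  have "PT L N 1 w = (if \<forall>j\<in>{1..N}. lo w j \<le> j \<and> j \<le> w j then {canon N w} else {})"
    by (rule PT_1) (use base in auto)
  thus ?case unfolding Dp_1 by auto
next
  case (Suc r)
  note s = Suc.prems(1) and wL = Suc.prems(2)
  have IH: "finite (PT L N r u) \<and> card (PT L N r u) = Dp N r u" if u: "u \<in> boxP N w" for u
  proof (rule Suc.IH)
    show "sinc1 u N" using boxP_props(3)[OF u s] .
    fix j assume j: "j \<in> {1..N}" thus "u j \<le> L" using boxP_props(1)[OF u s j] wL[OF j] by auto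
  qed
  have finB: "finite (boxP N w)" unfolding boxP_def by (rule finite_PiE) auto
  have fS: "finite (Sigma (boxP N w) (\<lambda>u. PT L N r u))" using finB IH by (intro finite_SigmaI) blast+
  have eq: "PT L N (Suc r) w = (\<lambda>(u, P). extP N r w u P) ` Sigma (boxP N w) (\<lambda>u. PT L N r u)"
    by (rule PT_Suc[OF s wL Suc.hyps])
  have "card (PT L N (Suc r) w) = card (Sigma (boxP N w) (\<lambda>u. PT L N r u))"
    unfolding eq by (rule card_image[OF ext_inj[OF s]])
  also have "\<dots> = (\<Sum>u\<in>boxP N w. card (PT L N r u))" by (rule card_SigmaI[OF finB]) (use IH in blast)
  also have "\<dots> = (\<Sum>u\<in>boxP N w. Dp N r u)" by (rule sum.cong[OF refl]) (use IH in blast)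
  also have "\<dots> = Dp N (Suc r) w" by simp
  finally show ?case using fS eq by simp
qed



definition PTmat :: "nat \<Rightarrow> (nat \<Rightarrow> nat) \<Rightarrow> nat \<Rightarrow> rat mat" where
  "PTmat r w N = mat N N (\<lambda>(i,j). gb (int (w (Suc i)) + int r - int j - 2) (int (w (Suc i)) - int j - 1))"

lemma sinc1_gap: assumes "sinc1 w N" "1 \<le> i" "i \<le> k" "k \<le> N" shows "w i + (k - i) \<le> w k"
  using assms(3,4)
proof (induction k)
  case 0 thus ?case by simp
next
  case (Suc k)
  show ?case
  proof (cases "i = Suc k")
    case True thus ?thesis by simp
  next
    case False
    hence "i \<le> k" using Suc by simp
    with Suc have "w i + (k - i) \<le> w k" by simp
    moreover have "w k < w (Suc k)" using assms(1,2) Suc \<open>i \<le> k\<close> unfolding sinc1_def by auto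
    ultimately show ?thesis using \<open>i \<le> k\<close> by simp
  qed
qed

lemma Dp_base:
  assumes s: "sinc1 w N" and w1: "\<And>j. j \<in> {1..N} \<Longrightarrow> 1 \<le> w j"
  shows "of_nat (Dp N 0 w) = det (PTmat 0 w N)"
proof (cases "\<forall>j\<in>{1..N}. w j = j")
  case True
  have "det (PTmat 0 w N) = 1"
  proof -
    have wi: "w (Suc i) = Suc i" if "i < N" for i using True that by auto
    have "diag_mat (PTmat 0 w N) = map (\<lambda>_. 1) [0..<N]"
      unfolding diag_mat_def PTmat_def using wi by (auto simp: gb_def)
    moreover have "PTmat 0 w N $$ (i, j) = 0" if "i < j" "j < N" for i j
      using that wi unfolding PTmat_def by (auto simp: gb_def)
    ultimately show ?thesis
      by (subst det_lower_triangular[of N], auto simp: PTmat_def map_replicate_const)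
  qed
  thus ?thesis using True by simp
next
  case False
  then obtain j where j: "j \<in> {1..N}" "w j \<noteq> j" by blast
  have ge: "k \<le> w k" if "k \<in> {1..N}" for k
    using sinc1_gap[OF s, of 1 k] w1[of 1] that by auto
  have "w j + (N - j) \<le> w N" using sinc1_gap[OF s, of j N] j by auto
  hence big: "N < w N" using ge[OF j(1)] j by linarith
  have N0: "0 < N" using j by auto
  have "det (PTmat 0 w N) = 0"
  proof (rule det_zero_row[of _ N "N - 1"])
    show "PTmat 0 w N \<in> carrier_mat N N" by (simp add: PTmat_def)
    show "N - 1 < N" using N0 by simp
    fix k assume k: "k < N"
    have "Suc (N - 1) = N" using N0 by simp
    thus "PTmat 0 w N $$ (N - 1, k) = 0" using k big unfolding PTmat_def
      by (auto intro!: gb_zero)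
  qed
  thus ?thesis using False by simp
qed

lemma tele:
  fixes g G :: "nat \<Rightarrow> rat"
  assumes G: "\<And>x. G (Suc x) = G x + g (Suc x)" and ab: "a \<le> b"
  shows "(\<Sum>x\<in>{Suc a..b}. g x) = G b - G a"
  using ab
proof (induction b)
  case 0 thus ?case by simp
next
  case (Suc b)
  show ?case
  proof (cases "a = Suc b")
    case True thus ?thesis by simp
  next
    case False
    hence "a \<le> b" using Suc by simp
    hence "{Suc a..Suc b} = insert (Suc b) {Suc a..b}" by auto
    thus ?thesis using Suc.IH[OF \<open>a \<le> b\<close>] G[of b] by simp
  qed
qed

lemma PT_entry:
  assumes s: "sinc1 w N" and i: "i < N"
  shows "(\<Sum>x\<in>{lo w (Suc i)..w (Suc i)}. gb (int x + int r - int j - 2) (int x - int j - 1))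
       = gb (int (w (Suc i)) + int (Suc r) - int j - 2) (int (w (Suc i)) - int j - 1)
         - (if 0 < i \<and> True then gb (int (w (Suc (i - 1))) + int (Suc r) - int j - 2) (int (w (Suc (i - 1))) - int j - 1) else 0)"
proof -
  define G where "G X = gb (int X + int r - int j - 1) (int X - int j - 1)" for X :: nat
  define g where "g x = gb (int x + int r - int j - 2) (int x - int j - 1)" for x :: nat
  have Gs: "G (Suc x) = G x + g (Suc x)" for x
    unfolding G_def g_def using gb_pascal[of "int x + int r - int j - 1" "int x - int j"]
    by (simp add: algebra_simps)
  have G0: "G 0 = 0" unfolding G_def by simp
  define a where "a = (if i = 0 then 0 else w i)"
  have lo: "lo w (Suc i) = Suc a" unfolding lo_def a_def by auto
  have ab: "a \<le> w (Suc i)"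
  proof (cases "i = 0")
    case False thus ?thesis using s i unfolding a_def sinc1_def by (auto intro: less_imp_le)
  qed (simp add: a_def)
  have "(\<Sum>x\<in>{lo w (Suc i)..w (Suc i)}. g x) = G (w (Suc i)) - G a"
    unfolding lo by (rule tele[where G=G and g=g, OF Gs ab])
  moreover have "G (w (Suc i)) = gb (int (w (Suc i)) + int (Suc r) - int j - 2) (int (w (Suc i)) - int j - 1)"
    unfolding G_def by (simp add: algebra_simps)
  moreover have "G a = (if 0 < i \<and> True then gb (int (w (Suc (i - 1))) + int (Suc r) - int j - 2) (int (w (Suc (i - 1))) - int j - 1) else 0)"
    using G0 unfolding a_def G_def by (auto simp: algebra_simps)
  ultimately show ?thesis unfolding g_def by simp
qed

lemma reindex_box:
  fixes F :: "(nat \<Rightarrow> nat) \<Rightarrow> rat"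
  assumes F: "\<And>u v. (\<And>i. i < N \<Longrightarrow> u (Suc i) = v (Suc i)) \<Longrightarrow> F u = F v"
  shows "(\<Sum>u\<in>boxP N w. F u) = (\<Sum>v\<in>PiE {0..<N} (\<lambda>i. {lo w (Suc i)..w (Suc i)}). F (\<lambda>j. v (j - 1)))"
proof -
  define h where "h v = restrict (\<lambda>j. v (j - 1)) {1..N}" for v :: "nat \<Rightarrow> nat"
  define h' where "h' u = restrict (\<lambda>i. u (Suc i)) {0..<N}" for u :: "nat \<Rightarrow> nat"
  have bij: "bij_betw h (PiE {0..<N} (\<lambda>i. {lo w (Suc i)..w (Suc i)})) (boxP N w)"
  proof (rule bij_betw_byWitness[where f'=h'])
    show "\<forall>a\<in>PiE {0..<N} (\<lambda>i. {lo w (Suc i)..w (Suc i)}). h' (h a) = a"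
      by (auto simp: h_def h'_def PiE_def extensional_def fun_eq_iff)
    show "\<forall>a'\<in>boxP N w. h (h' a') = a'"
      by (auto simp: h_def h'_def boxP_def PiE_def extensional_def fun_eq_iff)
    show "h ` PiE {0..<N} (\<lambda>i. {lo w (Suc i)..w (Suc i)}) \<subseteq> boxP N w"
    proof
      fix u assume "u \<in> h ` PiE {0..<N} (\<lambda>i. {lo w (Suc i)..w (Suc i)})"
      then obtain v where v: "v \<in> PiE {0..<N} (\<lambda>i. {lo w (Suc i)..w (Suc i)})" and u: "u = h v" by auto
      show "u \<in> boxP N w" unfolding boxP_def u h_def
      proof (rule PiE_I)
        fix j assume j: "j \<in> {1..N}"
        hence jj: "j - 1 < N" "Suc (j - 1) = j" by auto
        have "v (j - 1) \<in> {lo w (Suc (j - 1))..w (Suc (j - 1))}" using v jj(1) by (auto simp: PiE_iff)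
        thus "restrict (\<lambda>j. v (j - 1)) {1..N} j \<in> {lo w j..w j}" using j unfolding jj(2) by simp
      qed auto
    qed
    show "h' ` boxP N w \<subseteq> PiE {0..<N} (\<lambda>i. {lo w (Suc i)..w (Suc i)})"
    proof
      fix v assume "v \<in> h' ` boxP N w"
      then obtain u where u: "u \<in> boxP N w" and v: "v = h' u" by auto
      show "v \<in> PiE {0..<N} (\<lambda>i. {lo w (Suc i)..w (Suc i)})" unfolding v h'_def
      proof (rule PiE_I)
        fix i assume i: "i \<in> {0..<N}"
        hence "Suc i \<in> {1..N}" by auto
        thus "restrict (\<lambda>i. u (Suc i)) {0..<N} i \<in> {lo w (Suc i)..w (Suc i)}" using u i
          unfolding boxP_def by (auto simp: PiE_iff)
      qed auto
    qed
  qed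
  have "(\<Sum>u\<in>boxP N w. F u) = (\<Sum>v\<in>PiE {0..<N} (\<lambda>i. {lo w (Suc i)..w (Suc i)}). F (h v))"
    using sum.reindex_bij_betw[OF bij, of F] by simp
  also have "\<dots> = (\<Sum>v\<in>PiE {0..<N} (\<lambda>i. {lo w (Suc i)..w (Suc i)}). F (\<lambda>j. v (j - 1)))"
    by (intro sum.cong refl F) (auto simp: h_def)
  finally show ?thesis .
qed

lemma Dp_det:
  assumes "sinc1 w N" "\<And>j. j \<in> {1..N} \<Longrightarrow> 1 \<le> w j"
  shows "of_nat (Dp N r w) = det (PTmat r w N)"
  using assms
proof (induction r arbitrary: w)
  case 0 thus ?case using Dp_base by auto
next
  case (Suc r)
  note s = Suc.prems(1) and w1 = Suc.prems(2)
  let ?S = "\<lambda>i. {lo w (Suc i)..w (Suc i)}"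
  let ?f = "\<lambda>i x j. gb (int x + int r - int j - 2) (int x - int j - 1)"
  have "(of_nat (Dp N (Suc r) w) :: rat) = (\<Sum>u\<in>boxP N w. of_nat (Dp N r u))" by simp
  also have "\<dots> = (\<Sum>u\<in>boxP N w. det (PTmat r u N))"
  proof (intro sum.cong refl Suc.IH)
    fix u assume u: "u \<in> boxP N w"
    show "sinc1 u N" using boxP_props(3)[OF u s] .
    fix j assume "j \<in> {1..N}" thus "1 \<le> u j" using boxP_props(1)[OF u s] by auto
  qed
  also have "\<dots> = (\<Sum>v\<in>PiE {0..<N} ?S. det (PTmat r (\<lambda>j. v (j - 1)) N))"
  proof (rule reindex_box)
    fix u v :: "nat \<Rightarrow> nat" assume uv: "\<And>i. i < N \<Longrightarrow> u (Suc i) = v (Suc i)"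
    show "det (PTmat r u N) = det (PTmat r v N)" unfolding PTmat_def
      by (intro arg_cong[where f=det] eq_matI) (auto simp: uv)
  qed
  also have "\<dots> = (\<Sum>v\<in>PiE {0..<N} ?S. det (mat N N (\<lambda>(i,j). ?f i (v i) j)))"
    by (simp add: PTmat_def)
  also have "\<dots> = det (mat N N (\<lambda>(i,j). \<Sum>x\<in>?S i. ?f i x j))"
    by (rule det_rows_sum) auto
  also have "\<dots> = det (mat N N (\<lambda>(i,j). gb (int (w (Suc i)) + int (Suc r) - int j - 2) (int (w (Suc i)) - int j - 1)
         - (if 0 < i \<and> True then gb (int (w (Suc (i - 1))) + int (Suc r) - int j - 2) (int (w (Suc (i - 1))) - int j - 1) else 0)))"
    using PT_entry[OF s] by (intro arg_cong[where f=det] eq_matI) auto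
  also have "\<dots> = det (PTmat (Suc r) w N)"
    unfolding PTmat_def
    by (rule det_bidiag[where R="\<lambda>i j. gb (int (w (Suc i)) + int (Suc r) - int j - 2) (int (w (Suc i)) - int j - 1)"
          and e="\<lambda>_. True"])
  finally show ?case .
qed



theorem mainTheorem3:
  fixes L M N K :: nat
  assumes "M \<ge> L" and "L > N" and "N \<ge> 1" and "K = M - L + N + 1"
  shows "Z L M N = card (path_tuples L K N) \<and>
         int (Z L M N) =
           det (mat N N (\<lambda>(i, j). ibinom (int M + int i - int j) (int L - int N + int i - int j)))"
proof -
  let ?T = "mat N N (\<lambda>(i, j). ibinom (int M + int i - int j) (int L - int N + int i - int j))"
  let ?R = "mat N N (\<lambda>(i, j). gb (int M + int i - int j) (int L - int N + int i - int j))"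
  have M1: "1 \<le> M" using assms by auto
  have RT: "?R = map_mat of_int ?T"
    by (rule eq_matI) (use assms in \<open>auto simp: gb_nonneg\<close>)
  have FV: "FVmat M (\<lambda>i. L - N + i + 1) N = ?R"
  proof (rule eq_matI)
    fix i j assume "i < dim_row ?R" "j < dim_col ?R"
    have "int (L - N + i + 1) - int j - 1 = int L - int N + int i - int j" using assms by simp
    note e = this
    have ij: "i < N" "j < N" using \<open>i < dim_row ?R\<close> \<open>j < dim_col ?R\<close> by auto
    have "FVmat M (\<lambda>i. L - N + i + 1) N $$ (i, j) = gb (int M + int i - int j) (int (L - N + i + 1) - int j - 1)"
      using ij by (simp add: FVmat_def)
    also have "\<dots> = gb (int M + int i - int j) (int L - int N + int i - int j)" by (simp only: e)
    also have "\<dots> = ?R $$ (i, j)" using ij by simp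
    finally show "FVmat M (\<lambda>i. L - N + i + 1) N $$ (i, j) = ?R $$ (i, j)" .
  qed (auto simp: FVmat_def)
  have PTm: "PTmat K (\<lambda>j. L - N + j) N = ?R"
  proof (rule eq_matI)
    fix i j assume "i < dim_row ?R" "j < dim_col ?R"
    hence ij: "i < N" "j < N" by auto
    have e1: "int (L - N + Suc i) + int K - int j - 2 = int M + int i - int j" using assms by simp
    have e2: "int (L - N + Suc i) - int j - 1 = int L - int N + int i - int j" using assms by simp
    have "PTmat K (\<lambda>j. L - N + j) N $$ (i, j) = gb (int (L - N + Suc i) + int K - int j - 2) (int (L - N + Suc i) - int j - 1)"
      using ij by (simp add: PTmat_def)
    also have "\<dots> = gb (int M + int i - int j) (int L - int N + int i - int j)" by (simp only: e1 e2)
    also have "\<dots> = ?R $$ (i, j)" using ij by simp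
    finally show "PTmat K (\<lambda>j. L - N + j) N $$ (i, j) = ?R $$ (i, j)" .
  qed (auto simp: PTmat_def)
  have z: "(of_nat (Z L M N) :: rat) = det ?R" using Z_det[OF assms(2) M1] FV by simp
  have sw: "sinc1 (\<lambda>j. L - N + j) N" unfolding sinc1_def by auto
  have K1: "1 \<le> K" using assms by simp
  have wL: "\<And>j. j \<in> {1..N} \<Longrightarrow> L - N + j \<le> L" using assms by auto
  have c: "card (path_tuples L K N) = Dp N K (\<lambda>j. L - N + j)"
    unfolding path_tuples_PT using PT_card[OF K1 sw wL] by blast
  have w1: "\<And>j. j \<in> {1..N} \<Longrightarrow> 1 \<le> L - N + j" by auto
  have p: "(of_nat (card (path_tuples L K N)) :: rat) = det ?R"
  proof -
    have d: "(of_nat (Dp N K (\<lambda>j. L - N + j)) :: rat) = det (PTmat K (\<lambda>j. L - N + j) N)"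
      by (rule Dp_det[OF sw w1])
    show ?thesis using c d PTm by simp
  qed
  have "Z L M N = card (path_tuples L K N)" using z p by simp
  moreover have "(of_int (int (Z L M N)) :: rat) = of_int (det ?T)"
    using z RT of_int_hom.hom_det[of ?T] by simp
  hence "int (Z L M N) = det ?T" by (simp only: of_int_eq_iff)
  ultimately show ?thesis by simp
qed


end
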